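(* Fix the width $m$. Assume that for every $y$ the loss $\ell(\cdot,y)$ is $A$-Lipschitz continuous and that $|\ell|\le B$. Then for any $\delta>0$, with probability at least $1-\delta$ over the choice of an i.i.d. training set $S=\{(x_i,y_i)\}_{i=1}^n$ with $x_i\in[-1,1]^d$, simultaneously for every parameter vector $\theta$ of a width-$m$ two-layer network, $$|L(\theta)-\hat L_n(\theta)|\le 4A\sqrt{\frac{2\ln(2d)}{n}}\,(\|\theta\|_{\mathcal{P}}+1)+B\sqrt{\frac{2\ln\big(2c(\|\theta\|_{\mathcal{P}}+1)^2/\delta\big)}{n}},$$ where $c=\sum_{k=1}^\infty 1/k^2$.
   Context: $\sigma:\mathbb{R}\to\mathbb{R}$ is $1$-Lipschitz and positively homogeneous ($\sigma(\alpha t)=\alpha\sigma(t)$, $\alpha\ge0$). A width-$m$ two-layer network with parameters $\theta=\{(a_k,w_k)\}_{k=1}^m$ is $f(x;\theta)=\sum_{k=1}^m a_k\sigma(w_k^Tx)$, $x\in[-1,1]^d$. Path norm $\|\theta\|_{\mathcal{P}}=\sum_k|a_k|\|w_k\|_1$. Population risk $L(\theta)=\mathbb{E}_{x,y}[\ell(f(x;\theta),y)]$, empirical risk $\hat L_n(\theta)=\frac1n\sum_{i=1}^n\ell(f(x_i;\theta),y_i)$. *)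

theory Defs
  imports "HOL-Probability.Probability"
begin

text \<open>Parameters of a width-m two-layer network: theta k = (a_k, w_k) for k < m
  (values at indices k >= m are irrelevant).\<close>

definition l1norm :: "real ^ 'd \<Rightarrow> real" where
  "l1norm w = (\<Sum>i\<in>UNIV. \<bar>w $ i\<bar>)"

definition nn_out :: "(real \<Rightarrow> real) \<Rightarrow> nat \<Rightarrow> (nat \<Rightarrow> real \<times> (real ^ 'd)) \<Rightarrow> real ^ 'd \<Rightarrow> real" where
  "nn_out \<sigma> m \<theta> x = (\<Sum>k<m. fst (\<theta> k) * \<sigma> (snd (\<theta> k) \<bullet> x))"

definition path_norm :: "nat \<Rightarrow> (nat \<Rightarrow> real \<times> (real ^ 'd)) \<Rightarrow> real" where
  "path_norm m \<theta> = (\<Sum>k<m. \<bar>fst (\<theta> k)\<bar> * l1norm (snd (\<theta> k)))"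

definition pop_risk :: "(real \<Rightarrow> 'b \<Rightarrow> real) \<Rightarrow> (real \<Rightarrow> real) \<Rightarrow> nat \<Rightarrow> ((real ^ 'd) \<times> 'b) measure
    \<Rightarrow> (nat \<Rightarrow> real \<times> (real ^ 'd)) \<Rightarrow> real" where
  "pop_risk loss \<sigma> m D \<theta> = (\<integral>z. loss (nn_out \<sigma> m \<theta> (fst z)) (snd z) \<partial>D)"

definition emp_risk :: "(real \<Rightarrow> 'b \<Rightarrow> real) \<Rightarrow> (real \<Rightarrow> real) \<Rightarrow> nat \<Rightarrow> nat \<Rightarrow> (nat \<Rightarrow> (real ^ 'd) \<times> 'b)
    \<Rightarrow> (nat \<Rightarrow> real \<times> (real ^ 'd)) \<Rightarrow> real" where
  "emp_risk loss \<sigma> m n S \<theta> = (1 / real n) * (\<Sum>i<n. loss (nn_out \<sigma> m \<theta> (fst (S i))) (snd (S i)))"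

end

theory Submission
  imports Defs
begin


definition RS :: "nat \<Rightarrow> (nat \<Rightarrow> real) set" where
  "RS n = PiE {..<n} (\<lambda>_. {-1, 1})"

lemma finite_RS[simp]: "finite (RS n)"
  unfolding RS_def by (auto intro!: finite_PiE)

lemma card_RS: "card (RS n) = 2 ^ n"
  unfolding RS_def by (simp add: card_PiE) (metis numeral_2_eq_2)

lemma RS_nonempty: "RS n \<noteq> {}"
  using card_RS[of n] by auto

lemma RS_val: "\<epsilon> \<in> RS n \<Longrightarrow> i < n \<Longrightarrow> \<epsilon> i = 1 \<or> \<epsilon> i = -1"
  unfolding RS_def by (auto simp: PiE_def Pi_def)

lemma sum_RS_Suc:
  "(\<Sum>\<epsilon>\<in>RS (Suc n). F \<epsilon>) = (\<Sum>\<epsilon>\<in>RS n. F (\<epsilon>(n:=1)) + F (\<epsilon>(n:=-1)))"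
proof -
  have e: "RS (Suc n) = (\<lambda>(y, g). g(n := y)) ` ({-1,1} \<times> RS n)"
    unfolding RS_def lessThan_Suc by (rule PiE_insert_eq)
  have inj: "inj_on (\<lambda>(y, g). g(n := y)) ({-1::real,1} \<times> RS n)"
  proof (rule inj_onI, clarify)
    fix y g y' g'
    assume g: "g \<in> RS n" and g': "g' \<in> RS n" and eq: "g(n := y) = g'(n := y')"
    have "y = y'" using fun_cong[OF eq, of n] by simp
    moreover have "g = g'"
    proof
      fix i show "g i = g' i"
      proof (cases "i = n")
        case True then show ?thesis using g g' unfolding RS_def by (auto simp: PiE_def extensional_def)
      next
        case False then show ?thesis using fun_cong[OF eq, of i] by simp
      qed
    qed
    ultimately show "y = y' \<and> g = g'" by simp
  qed
  have "(\<Sum>\<epsilon>\<in>RS (Suc n). F \<epsilon>) = (\<Sum>p\<in>{-1::real,1} \<times> RS n. F ((\<lambda>(y, g). g(n := y)) p))"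
    unfolding e by (subst sum.reindex[OF inj]) (simp add: comp_def)
  also have "\<dots> = (\<Sum>y\<in>{-1::real,1}. \<Sum>g\<in>RS n. F (g(n:=y)))"
    by (subst sum.cartesian_product) (auto intro!: sum.cong)
  also have "\<dots> = (\<Sum>g\<in>RS n. F (g(n:=-1))) + (\<Sum>g\<in>RS n. F (g(n:=1)))"
    by simp
  also have "\<dots> = (\<Sum>\<epsilon>\<in>RS n. F (\<epsilon>(n:=1)) + F (\<epsilon>(n:=-1)))"
    by (simp add: sum.distrib add.commute)
  finally show ?thesis .
qed

lemma sum_upd_Suc:
  "(\<Sum>i<Suc n. (\<epsilon>(n:=s)) i * f i) = (\<Sum>i<n. \<epsilon> i * f i) + s * f n"
  by (simp add: sum.lessThan_Suc)

definition negE :: "nat \<Rightarrow> (nat \<Rightarrow> real) \<Rightarrow> (nat \<Rightarrow> real)" where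
  "negE n \<epsilon> = (\<lambda>i. if i < n then - \<epsilon> i else undefined)"

lemma negE_RS: "\<epsilon> \<in> RS n \<Longrightarrow> negE n \<epsilon> \<in> RS n"
  unfolding RS_def negE_def by (auto simp: PiE_def Pi_def extensional_def)

lemma negE_negE: "\<epsilon> \<in> RS n \<Longrightarrow> negE n (negE n \<epsilon>) = \<epsilon>"
  unfolding RS_def negE_def by (auto simp: PiE_def extensional_def)

lemma sum_RS_neg: "(\<Sum>\<epsilon>\<in>RS n. F \<epsilon>) = (\<Sum>\<epsilon>\<in>RS n. F (negE n \<epsilon>))"
proof -
  have "bij_betw (negE n) (RS n) (RS n)"
    by (rule bij_betw_byWitness[where f'="negE n"]) (auto simp: negE_RS negE_negE)
  then show ?thesis by (subst sum.reindex_bij_betw[symmetric]) auto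
qed

lemma cosh_bound: "exp (a::real) + exp (-a) \<le> 2 * exp (a\<^sup>2 / 2)"
proof -
  define y where "y = \<bar>a\<bar>"
  have y: "y \<ge> 0" by (simp add: y_def)
  have "- (2*y) * (1/2) + ln (1 + (1/2) * (exp (2*y) - 1)) \<le> (2*y)\<^sup>2 / 8"
    by (rule Hoeffdings_lemma_aux) (use y in auto)
  also have "(2*y)\<^sup>2 / 8 = a\<^sup>2/2" by (simp add: y_def power2_eq_square)
  also have "1 + (1/2) * (exp (2*y) - 1) = (1 + exp (2*y))/2" by (simp add: field_simps)
  finally have "ln ((1 + exp (2*y))/2) \<le> a\<^sup>2/2 + y" by simp
  then have "(1 + exp (2*y))/2 \<le> exp (a\<^sup>2/2 + y)"
    by (metis add_pos_pos exp_gt_zero exp_le_cancel_iff exp_ln half_gt_zero zero_less_one)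
  then have "(1 + exp (2*y)) * exp (-y) \<le> 2 * exp (a\<^sup>2/2 + y) * exp (-y)"
    by simp
  also have "2 * exp (a\<^sup>2/2 + y) * exp (-y) = 2 * exp (a\<^sup>2/2)"
    by (simp add: mult.assoc flip: exp_add)
  also have "(1 + exp (2*y)) * exp (-y) = exp y + exp (-y)"
    by (simp add: distrib_right flip: exp_add)
  also have "exp y + exp (-y) = exp a + exp (-a)"
    by (cases "a \<ge> 0") (auto simp: y_def)
  finally show ?thesis .
qed

lemma mgf_RS:
  "(\<Sum>\<epsilon>\<in>RS n. exp (\<Sum>i<n. \<epsilon> i * a i)) \<le> 2 ^ n * exp ((\<Sum>i<n. (a i)\<^sup>2) / 2)"
proof (induction n)
  case 0
  then show ?case by (simp add: RS_def)
next
  case (Suc n)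
  have "(\<Sum>\<epsilon>\<in>RS (Suc n). exp (\<Sum>i<Suc n. \<epsilon> i * a i))
      = (\<Sum>\<epsilon>\<in>RS n. exp (\<Sum>i<n. \<epsilon> i * a i) * (exp (a n) + exp (- a n)))"
    by (simp add: sum_RS_Suc sum_upd_Suc exp_add distrib_left)
  also have "\<dots> \<le> (\<Sum>\<epsilon>\<in>RS n. exp (\<Sum>i<n. \<epsilon> i * a i) * (2 * exp ((a n)\<^sup>2/2)))"
    by (intro sum_mono mult_left_mono cosh_bound) auto
  also have "\<dots> = (\<Sum>\<epsilon>\<in>RS n. exp (\<Sum>i<n. \<epsilon> i * a i)) * (2 * exp ((a n)\<^sup>2/2))"
    by (simp add: sum_distrib_right)
  also have "\<dots> \<le> 2 ^ n * exp ((\<Sum>i<n. (a i)\<^sup>2) / 2) * (2 * exp ((a n)\<^sup>2/2))"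
    by (intro mult_right_mono Suc.IH) auto
  also have "\<dots> = 2 ^ Suc n * exp ((\<Sum>i<Suc n. (a i)\<^sup>2) / 2)"
    by (simp add: exp_add add_divide_distrib sum.lessThan_Suc mult_ac flip: exp_add)
  finally show ?case .
qed


lemma Max_img_ex: "finite A \<Longrightarrow> A \<noteq> {} \<Longrightarrow> \<exists>a\<in>A. Max (f ` A) = f a"
proof -
  assume "finite A" "A \<noteq> {}"
  then have "Max (f ` A) \<in> f ` A" by (intro Max_in) auto
  then show ?thesis by auto
qed

lemma massart:
  fixes v :: "'k \<Rightarrow> nat \<Rightarrow> real"
  assumes K: "finite K" "card K \<ge> 2" and r: "r > 0"
    and v: "\<And>k. k \<in> K \<Longrightarrow> (\<Sum>i<n. (v k i)\<^sup>2) \<le> r\<^sup>2"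
  shows "(\<Sum>\<epsilon>\<in>RS n. Max ((\<lambda>k. \<Sum>i<n. \<epsilon> i * v k i) ` K)) \<le> 2^n * (sqrt (2 * ln (card K)) * r)"
proof -
  define N :: real where "N = 2 ^ n"
  define X where "X = (\<lambda>\<epsilon>. Max ((\<lambda>k. \<Sum>i<n. \<epsilon> i * v k i) ` K))"
  define c :: real where "c = card K"
  define s where "s = sqrt (2 * ln c)"
  define l where "l = s / r"
  have Kne: "K \<noteq> {}" using K by auto
  have c2: "c \<ge> 2" using K by (simp add: c_def)
  have lc: "ln c > 0" using c2 by simp
  have s: "s > 0" "s\<^sup>2 = 2 * ln c" using lc by (auto simp: s_def)
  have l: "l > 0" using s r by (simp add: l_def)
  have N: "N > 0" "card (RS n) = N" by (simp_all add: N_def card_RS)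
  define \<mu> where "\<mu> = (\<Sum>\<epsilon>\<in>RS n. X \<epsilon>) / N"
  have A: "exp (l * \<mu>) \<le> (\<Sum>\<epsilon>\<in>RS n. (1/N) * exp (l * X \<epsilon>))"
  proof -
    have "exp (l * (\<Sum>\<epsilon>\<in>RS n. (1/N) *\<^sub>R X \<epsilon>)) \<le> (\<Sum>\<epsilon>\<in>RS n. (1/N) * exp (l * X \<epsilon>))"
      using convex_on_sum[OF finite_RS RS_nonempty convex_on_exp[of l], where a="\<lambda>_. 1/N" and y=X] l N
      by auto
    moreover have "(\<Sum>\<epsilon>\<in>RS n. (1/N) *\<^sub>R X \<epsilon>) = \<mu>"
      by (simp add: \<mu>_def sum_distrib_left[symmetric] divide_inverse mult.commute)
    ultimately show ?thesis by simp
  qed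
  have B: "exp (l * X \<epsilon>) \<le> (\<Sum>k\<in>K. exp (\<Sum>i<n. \<epsilon> i * (l * v k i)))" for \<epsilon>
  proof -
    obtain k0 where k0: "k0 \<in> K" "X \<epsilon> = (\<Sum>i<n. \<epsilon> i * v k0 i)"
      using Max_img_ex[of K "(\<lambda>k. \<Sum>i<n. \<epsilon> i * v k i)"] K Kne unfolding X_def by auto
    have "exp (l * X \<epsilon>) = exp (\<Sum>i<n. \<epsilon> i * (l * v k0 i))"
      by (simp add: k0 sum_distrib_left mult_ac)
    also have "\<dots> \<le> (\<Sum>k\<in>K. exp (\<Sum>i<n. \<epsilon> i * (l * v k i)))"
      by (rule member_le_sum[OF k0(1)]) (use K in auto)
    finally show ?thesis .
  qed
  have C: "(\<Sum>\<epsilon>\<in>RS n. exp (l * X \<epsilon>)) \<le> c * (N * exp (l\<^sup>2 * r\<^sup>2 / 2))"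
  proof -
    have "(\<Sum>\<epsilon>\<in>RS n. exp (l * X \<epsilon>)) \<le> (\<Sum>\<epsilon>\<in>RS n. \<Sum>k\<in>K. exp (\<Sum>i<n. \<epsilon> i * (l * v k i)))"
      by (intro sum_mono B)
    also have "\<dots> = (\<Sum>k\<in>K. \<Sum>\<epsilon>\<in>RS n. exp (\<Sum>i<n. \<epsilon> i * (l * v k i)))"
      by (rule sum.swap)
    also have "\<dots> \<le> (\<Sum>k\<in>K. N * exp (l\<^sup>2 * r\<^sup>2 / 2))"
    proof (intro sum_mono)
      fix k assume k: "k \<in> K"
      have "(\<Sum>\<epsilon>\<in>RS n. exp (\<Sum>i<n. \<epsilon> i * (l * v k i))) \<le> 2 ^ n * exp ((\<Sum>i<n. (l * v k i)\<^sup>2) / 2)"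
        by (rule mgf_RS)
      also have "(\<Sum>i<n. (l * v k i)\<^sup>2) = l\<^sup>2 * (\<Sum>i<n. (v k i)\<^sup>2)"
        by (simp add: power_mult_distrib sum_distrib_left)
      also have "\<dots> \<le> l\<^sup>2 * r\<^sup>2" using v[OF k] by (simp add: mult_left_mono)
      finally show "(\<Sum>\<epsilon>\<in>RS n. exp (\<Sum>i<n. \<epsilon> i * (l * v k i))) \<le> N * exp (l\<^sup>2 * r\<^sup>2 / 2)"
        by (simp add: N_def)
    qed
    also have "\<dots> = c * (N * exp (l\<^sup>2 * r\<^sup>2 / 2))" by (simp add: c_def)
    finally show ?thesis .
  qed
  have "exp (l * \<mu>) \<le> c * exp (l\<^sup>2 * r\<^sup>2 / 2)"
  proof -
    have "exp (l * \<mu>) \<le> (1/N) * (\<Sum>\<epsilon>\<in>RS n. exp (l * X \<epsilon>))"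
      using A by (simp add: sum_distrib_left)
    also have "\<dots> \<le> (1/N) * (c * (N * exp (l\<^sup>2 * r\<^sup>2 / 2)))"
      using C N by (intro mult_left_mono) auto
    also have "\<dots> = c * exp (l\<^sup>2 * r\<^sup>2 / 2)" using N by simp
    finally show ?thesis .
  qed
  also have "c * exp (l\<^sup>2 * r\<^sup>2 / 2) = exp (ln c + l\<^sup>2 * r\<^sup>2 / 2)"
    using c2 by (simp add: exp_add)
  finally have "l * \<mu> \<le> ln c + l\<^sup>2 * r\<^sup>2 / 2" by simp
  also have "l\<^sup>2 * r\<^sup>2 = s\<^sup>2" using r by (simp add: l_def power_divide)
  finally have "l * \<mu> \<le> s\<^sup>2" using s by simp
  then have "\<mu> \<le> s\<^sup>2 / l" using l by (simp add: field_simps)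
  also have "s\<^sup>2 / l = s * r" using s r by (simp add: l_def power2_eq_square field_simps)
  finally have "\<mu> \<le> s * r" .
  then have "(\<Sum>\<epsilon>\<in>RS n. X \<epsilon>) \<le> N * (s * r)" using N by (simp add: \<mu>_def field_simps)
  then show ?thesis by (simp add: X_def N_def s_def c_def)
qed

lemma two_point:
  fixes w t :: "'j \<Rightarrow> real"
  assumes J: "finite J" "J \<noteq> {}" and A: "\<And>a b. \<bar>\<phi> a - \<phi> b\<bar> \<le> A * \<bar>a - b\<bar>"
  shows "Max ((\<lambda>j. w j + \<phi> (t j)) ` J) + Max ((\<lambda>j. w j - \<phi> (t j)) ` J)
       \<le> Max ((\<lambda>j. w j + A * t j) ` J) + Max ((\<lambda>j. w j - A * t j) ` J)"
proof -
  obtain j1 where j1: "j1 \<in> J" "Max ((\<lambda>j. w j + \<phi> (t j)) ` J) = w j1 + \<phi> (t j1)"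
    using Max_img_ex[of J "(\<lambda>j. w j + \<phi> (t j))"] J by auto
  obtain j2 where j2: "j2 \<in> J" "Max ((\<lambda>j. w j - \<phi> (t j)) ` J) = w j2 - \<phi> (t j2)"
    using Max_img_ex[of J "(\<lambda>j. w j - \<phi> (t j))"] J by auto
  have m1: "w j + A * t j \<le> Max ((\<lambda>j. w j + A * t j) ` J)" if "j \<in> J" for j
    using J that by (intro Max_ge) auto
  have m2: "w j - A * t j \<le> Max ((\<lambda>j. w j - A * t j) ` J)" if "j \<in> J" for j
    using J that by (intro Max_ge) auto
  have "\<phi> (t j1) - \<phi> (t j2) \<le> A * \<bar>t j1 - t j2\<bar>" using A[of "t j1" "t j2"] by linarith
  then show ?thesis
    using m1[OF j1(1)] m2[OF j2(1)] m1[OF j2(1)] m2[OF j1(1)] j1 j2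
    by (cases "t j1 \<ge> t j2") (auto simp: abs_if algebra_simps)
qed

lemma contraction_gen:
  fixes v :: "'j \<Rightarrow> nat \<Rightarrow> real"
  assumes J: "finite J" "J \<noteq> {}" and A: "\<And>i a b. \<bar>\<phi> i a - \<phi> i b\<bar> \<le> A * \<bar>a - b\<bar>"
  shows "(\<Sum>\<epsilon>\<in>RS n. Max ((\<lambda>j. u j + (\<Sum>i<n. \<epsilon> i * \<phi> i (v j i))) ` J))
       \<le> (\<Sum>\<epsilon>\<in>RS n. Max ((\<lambda>j. u j + (\<Sum>i<n. \<epsilon> i * (A * v j i))) ` J))"
proof (induction n arbitrary: u)
  case 0
  then show ?case by simp
next
  case (Suc n)
  have "(\<Sum>\<epsilon>\<in>RS (Suc n). Max ((\<lambda>j. u j + (\<Sum>i<Suc n. \<epsilon> i * \<phi> i (v j i))) ` J))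
    = (\<Sum>\<epsilon>\<in>RS n. Max ((\<lambda>j. (u j + \<phi> n (v j n)) + (\<Sum>i<n. \<epsilon> i * \<phi> i (v j i))) ` J))
      + (\<Sum>\<epsilon>\<in>RS n. Max ((\<lambda>j. (u j - \<phi> n (v j n)) + (\<Sum>i<n. \<epsilon> i * \<phi> i (v j i))) ` J))"
    by (simp add: sum_RS_Suc sum_upd_Suc sum.distrib algebra_simps)
  also have "\<dots> \<le> (\<Sum>\<epsilon>\<in>RS n. Max ((\<lambda>j. (u j + \<phi> n (v j n)) + (\<Sum>i<n. \<epsilon> i * (A * v j i))) ` J))
      + (\<Sum>\<epsilon>\<in>RS n. Max ((\<lambda>j. (u j - \<phi> n (v j n)) + (\<Sum>i<n. \<epsilon> i * (A * v j i))) ` J))"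
    by (intro add_mono Suc.IH)
  also have "\<dots> = (\<Sum>\<epsilon>\<in>RS n. Max ((\<lambda>j. (u j + (\<Sum>i<n. \<epsilon> i * (A * v j i))) + \<phi> n (v j n)) ` J)
       + Max ((\<lambda>j. (u j + (\<Sum>i<n. \<epsilon> i * (A * v j i))) - \<phi> n (v j n)) ` J))"
    by (simp add: sum.distrib algebra_simps)
  also have "\<dots> \<le> (\<Sum>\<epsilon>\<in>RS n. Max ((\<lambda>j. (u j + (\<Sum>i<n. \<epsilon> i * (A * v j i))) + A * v j n) ` J)
       + Max ((\<lambda>j. (u j + (\<Sum>i<n. \<epsilon> i * (A * v j i))) - A * v j n) ` J))"
    by (intro sum_mono two_point[OF J] A)
  also have "\<dots> = (\<Sum>\<epsilon>\<in>RS (Suc n). Max ((\<lambda>j. u j + (\<Sum>i<Suc n. \<epsilon> i * (A * v j i))) ` J))"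
    by (simp add: sum_RS_Suc sum_upd_Suc algebra_simps)
  finally show ?case .
qed

lemma contraction:
  fixes v :: "'j \<Rightarrow> nat \<Rightarrow> real"
  assumes J: "finite J" "J \<noteq> {}" and A: "\<And>i a b. \<bar>\<phi> i a - \<phi> i b\<bar> \<le> A * \<bar>a - b\<bar>"
  shows "(\<Sum>\<epsilon>\<in>RS n. Max ((\<lambda>j. \<Sum>i<n. \<epsilon> i * \<phi> i (v j i)) ` J))
       \<le> (\<Sum>\<epsilon>\<in>RS n. Max ((\<lambda>j. \<Sum>i<n. \<epsilon> i * (A * v j i)) ` J))"
  using contraction_gen[OF J A, where u="\<lambda>_. 0" and v=v and n=n] by simp


lemma l1norm_nonneg: "l1norm w \<ge> 0"
  unfolding l1norm_def by (auto intro: sum_nonneg)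

lemma l1norm_zero: "l1norm (w::real^'d) = 0 \<Longrightarrow> w = 0"
  unfolding l1norm_def by (subst (asm) sum_nonneg_eq_0_iff) (auto simp: vec_eq_iff)

lemma l1norm_scale: "l1norm (c *\<^sub>R (w::real^'d)) = \<bar>c\<bar> * l1norm w"
  unfolding l1norm_def by (simp add: abs_mult sum_distrib_left)

lemma inner_le_l1:
  fixes u x :: "real^'d"
  assumes "\<And>l. \<bar>x $ l\<bar> \<le> M"
  shows "u \<bullet> x \<le> l1norm u * M"
proof -
  have "u \<bullet> x = (\<Sum>l\<in>UNIV. u $ l * x $ l)" by (simp add: inner_vec_def)
  also have "\<dots> \<le> (\<Sum>l\<in>UNIV. \<bar>u $ l\<bar> * M)"
  proof (intro sum_mono)
    fix l
    have "u $ l * x $ l \<le> \<bar>u $ l\<bar> * \<bar>x $ l\<bar>" by (simp add: abs_mult[symmetric])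
    also have "\<dots> \<le> \<bar>u $ l\<bar> * M" using assms[of l] by (intro mult_left_mono) auto
    finally show "u $ l * x $ l \<le> \<bar>u $ l\<bar> * M" .
  qed
  also have "\<dots> = l1norm u * M" by (simp add: l1norm_def sum_distrib_right)
  finally show ?thesis .
qed

lemma abs_inner_le_l1:
  fixes u x :: "real^'d"
  assumes "\<And>l. \<bar>x $ l\<bar> \<le> M"
  shows "\<bar>u \<bullet> x\<bar> \<le> l1norm u * M"
proof -
  have "u \<bullet> x \<le> l1norm u * M" by (rule inner_le_l1[OF assms])
  moreover have "(-u) \<bullet> x \<le> l1norm (-u) * M" by (rule inner_le_l1[OF assms])
  moreover have "l1norm (-u) = l1norm u" by (simp add: l1norm_def)
  ultimately show ?thesis by simp
qed

context
  fixes \<sigma> :: "real \<Rightarrow> real"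
  assumes sigma_lip: "\<And>s t. \<bar>\<sigma> s - \<sigma> t\<bar> \<le> \<bar>s - t\<bar>"
    and sigma_hom: "\<And>\<alpha> t. \<alpha> \<ge> 0 \<Longrightarrow> \<sigma> (\<alpha> * t) = \<alpha> * \<sigma> t"
begin

lemma sigma0: "\<sigma> 0 = 0"
  using sigma_hom[of 0 0] by simp

definition unitv :: "real^'d \<Rightarrow> real^'d" where
  "unitv w = (1 / l1norm w) *\<^sub>R w"

lemma sigma_unitv: "\<sigma> (w \<bullet> x) = l1norm w * \<sigma> (unitv w \<bullet> x)"
proof (cases "l1norm w = 0")
  case True
  then show ?thesis using l1norm_zero[OF True] by (simp add: sigma0)
next
  case False
  have "w = l1norm w *\<^sub>R unitv w" using False by (simp add: unitv_def)
  then have "w \<bullet> x = l1norm w * (unitv w \<bullet> x)" by (metis inner_scaleR_left)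
  then show ?thesis using sigma_hom[OF l1norm_nonneg[of w]] by simp
qed

lemma l1_unitv: "l1norm (unitv w) \<le> 1"
  unfolding unitv_def l1norm_scale using l1norm_nonneg[of w]
  by (cases "l1norm w = 0") auto

lemma network_rad:
  fixes x :: "nat \<Rightarrow> real^'d" and J :: "(nat \<Rightarrow> real \<times> (real^'d)) set"
  assumes J: "finite J" "J \<noteq> {}" and Q: "\<And>\<theta>. \<theta> \<in> J \<Longrightarrow> path_norm m \<theta> \<le> Q"
    and x: "\<And>i l. i < n \<Longrightarrow> \<bar>x i $ l\<bar> \<le> 1" and n: "n > 0"
  shows "(\<Sum>\<epsilon>\<in>RS n. Max ((\<lambda>\<theta>. \<Sum>i<n. \<epsilon> i * nn_out \<sigma> m \<theta> (x i)) ` J))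
         \<le> 2 ^ n * (2 * Q * (sqrt (2 * ln (2 * real CARD('d))) * sqrt n))"
proof -
  define W where "W = insert 0 ((\<lambda>(\<theta>, k). unitv (snd (\<theta> k))) ` (J \<times> {..<m}))"
  have W: "finite W" "W \<noteq> {}" "0 \<in> W" using J by (auto simp: W_def)
  have W1: "l1norm u \<le> 1" if "u \<in> W" for u
    using that l1_unitv by (auto simp: W_def l1norm_def)
  define h where "h = (\<lambda>u \<epsilon>. \<Sum>i<n. \<epsilon> i * \<sigma> (u \<bullet> x i))"
  define H where "H = (\<lambda>\<epsilon>. Max ((\<lambda>u. \<bar>h u \<epsilon>\<bar>) ` W))"
  have h0: "h 0 \<epsilon> = 0" for \<epsilon> by (simp add: h_def sigma0)
  have Hge: "\<bar>h u \<epsilon>\<bar> \<le> H \<epsilon>" if "u \<in> W" for u \<epsilon>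
    unfolding H_def using W that by (intro Max_ge) auto
  have H0: "H \<epsilon> \<ge> 0" for \<epsilon> using Hge[OF W(3), of \<epsilon>] by simp
  obtain \<theta>0 where "\<theta>0 \<in> J" using J by auto
  have Q0: "Q \<ge> 0"
    using Q[OF \<open>\<theta>0 \<in> J\<close>] unfolding path_norm_def
    by (smt (verit) l1norm_nonneg mult_nonneg_nonneg abs_ge_zero sum_nonneg)
  have a: "(\<Sum>i<n. \<epsilon> i * nn_out \<sigma> m \<theta> (x i)) \<le> Q * H \<epsilon>" if th: "\<theta> \<in> J" for \<epsilon> \<theta>
  proof -
    have "(\<Sum>i<n. \<epsilon> i * nn_out \<sigma> m \<theta> (x i))
        = (\<Sum>i<n. \<Sum>k<m. \<epsilon> i * (fst (\<theta> k) * \<sigma> (snd (\<theta> k) \<bullet> x i)))"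
      unfolding nn_out_def by (simp add: sum_distrib_left)
    also have "\<dots> = (\<Sum>k<m. \<Sum>i<n. \<epsilon> i * (fst (\<theta> k) * \<sigma> (snd (\<theta> k) \<bullet> x i)))"
      by (rule sum.swap)
    also have "\<dots> = (\<Sum>k<m. fst (\<theta> k) * l1norm (snd (\<theta> k)) * h (unitv (snd (\<theta> k))) \<epsilon>)"
    proof (rule sum.cong[OF refl])
      fix k
      show "(\<Sum>i<n. \<epsilon> i * (fst (\<theta> k) * \<sigma> (snd (\<theta> k) \<bullet> x i))) =
            fst (\<theta> k) * l1norm (snd (\<theta> k)) * h (unitv (snd (\<theta> k))) \<epsilon>"
        unfolding h_def sum_distrib_left
        by (rule sum.cong[OF refl]) (subst sigma_unitv[of "snd (\<theta> k)"], simp add: mult_ac)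
    qed
    also have "\<dots> \<le> (\<Sum>k<m. \<bar>fst (\<theta> k)\<bar> * l1norm (snd (\<theta> k)) * H \<epsilon>)"
    proof (intro sum_mono)
      fix k assume k: "k \<in> {..<m}"
      have u: "unitv (snd (\<theta> k)) \<in> W" using th k by (auto simp: W_def)
      have "fst (\<theta> k) * l1norm (snd (\<theta> k)) * h (unitv (snd (\<theta> k))) \<epsilon>
          \<le> \<bar>fst (\<theta> k) * l1norm (snd (\<theta> k)) * h (unitv (snd (\<theta> k))) \<epsilon>\<bar>" by simp
      also have "\<dots> = \<bar>fst (\<theta> k)\<bar> * l1norm (snd (\<theta> k)) * \<bar>h (unitv (snd (\<theta> k))) \<epsilon>\<bar>"
        using l1norm_nonneg[of "snd (\<theta> k)"] by (simp add: abs_mult)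
      also have "\<dots> \<le> \<bar>fst (\<theta> k)\<bar> * l1norm (snd (\<theta> k)) * H \<epsilon>"
        using Hge[OF u] l1norm_nonneg[of "snd (\<theta> k)"] by (intro mult_left_mono) auto
      finally show "fst (\<theta> k) * l1norm (snd (\<theta> k)) * h (unitv (snd (\<theta> k))) \<epsilon>
          \<le> \<bar>fst (\<theta> k)\<bar> * l1norm (snd (\<theta> k)) * H \<epsilon>" .
    qed
    also have "\<dots> = path_norm m \<theta> * H \<epsilon>"
      by (simp add: path_norm_def sum_distrib_right)
    also have "\<dots> \<le> Q * H \<epsilon>" using Q[OF th] H0 by (intro mult_right_mono) auto
    finally show ?thesis .
  qed
  have a': "Max ((\<lambda>\<theta>. \<Sum>i<n. \<epsilon> i * nn_out \<sigma> m \<theta> (x i)) ` J) \<le> Q * H \<epsilon>" for \<epsilon>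
    using J a by (subst Max_le_iff) auto
  have b: "H \<epsilon> \<le> Max ((\<lambda>u. h u \<epsilon>) ` W) + Max ((\<lambda>u. h u (negE n \<epsilon>)) ` W)" if e: "\<epsilon> \<in> RS n" for \<epsilon>
  proof -
    have neg: "h u (negE n \<epsilon>) = - h u \<epsilon>" for u
      by (simp add: h_def negE_def sum_negf)
    have m1: "h u \<epsilon> \<le> Max ((\<lambda>u. h u \<epsilon>) ` W)" if "u \<in> W" for u
      using W that by (intro Max_ge) auto
    have m2: "h u (negE n \<epsilon>) \<le> Max ((\<lambda>u. h u (negE n \<epsilon>)) ` W)" if "u \<in> W" for u
      using W that by (intro Max_ge) auto
    have all: "\<bar>h u \<epsilon>\<bar> \<le> Max ((\<lambda>u. h u \<epsilon>) ` W) + Max ((\<lambda>u. h u (negE n \<epsilon>)) ` W)"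
      if u: "u \<in> W" for u
      using m1[OF u] m2[OF u] m1[OF W(3)] m2[OF W(3)] h0[of \<epsilon>] h0[of "negE n \<epsilon>"] neg[of u]
      by (auto simp: abs_if)
    show ?thesis unfolding H_def using W all by (subst Max_le_iff) auto
  qed
  define K where "K = (UNIV :: 'd set) \<times> {-1::real, 1}"
  define v where "v = (\<lambda>(l, s::real) i. s * x i $ l)"
  have cardK: "card K = 2 * CARD('d)" by (simp add: K_def card_cartesian_product)
  have e: "(\<Sum>i<n. \<epsilon> i * (1 * (u \<bullet> x i))) \<le> Max ((\<lambda>k. \<Sum>i<n. \<epsilon> i * v k i) ` K)"
    if u: "u \<in> W" for u \<epsilon>
  proof -
    define Y where "Y = (\<chi> l. \<Sum>i<n. \<epsilon> i * x i $ l)"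
    define MM where "MM = Max ((\<lambda>k. \<Sum>i<n. \<epsilon> i * v k i) ` K)"
    have Yb: "\<bar>Y $ l\<bar> \<le> MM" for l
    proof -
      have "(\<Sum>i<n. \<epsilon> i * v (l, 1) i) \<le> MM" "(\<Sum>i<n. \<epsilon> i * v (l, -1) i) \<le> MM"
        unfolding MM_def by (intro Max_ge; simp add: K_def)+
      then show ?thesis by (simp add: Y_def v_def sum_negf)
    qed
    have MM0: "MM \<ge> 0" using Yb[of undefined] by linarith
    have "(\<Sum>i<n. \<epsilon> i * (1 * (u \<bullet> x i))) = (\<Sum>i<n. \<Sum>l\<in>UNIV. \<epsilon> i * (u $ l * x i $ l))"
      by (simp add: inner_vec_def sum_distrib_left)
    also have "\<dots> = (\<Sum>l\<in>UNIV. \<Sum>i<n. \<epsilon> i * (u $ l * x i $ l))"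
      by (rule sum.swap)
    also have "\<dots> = u \<bullet> Y"
      by (simp add: Y_def inner_vec_def sum_distrib_left mult_ac)
    finally have "(\<Sum>i<n. \<epsilon> i * (1 * (u \<bullet> x i))) = u \<bullet> Y" .
    also have "\<dots> \<le> l1norm u * MM" by (rule inner_le_l1[OF Yb])
    also have "\<dots> \<le> 1 * MM" using W1[OF u] MM0 by (intro mult_right_mono) auto
    finally show ?thesis by (simp add: MM_def)
  qed
  have mass: "(\<Sum>\<epsilon>\<in>RS n. Max ((\<lambda>k. \<Sum>i<n. \<epsilon> i * v k i) ` K))
      \<le> 2 ^ n * (sqrt (2 * ln (card K)) * sqrt n)"
  proof (rule massart)
    show "finite K" by (simp add: K_def)
    show "2 \<le> card K" using cardK by simp
    show "sqrt (real n) > 0" using n by simp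
    fix k assume k: "k \<in> K"
    have "(\<Sum>i<n. (v k i)\<^sup>2) \<le> (\<Sum>i<n. 1)"
    proof (intro sum_mono)
      fix i assume i: "i \<in> {..<n}"
      obtain l s where ks: "k = (l, s)" "s = 1 \<or> s = -1" using k by (auto simp: K_def)
      have "(v k i)\<^sup>2 = (x i $ l)\<^sup>2" using ks by (auto simp: v_def)
      also have "\<dots> = \<bar>x i $ l\<bar>\<^sup>2" by simp
      also have "\<dots> \<le> 1" using x[of i l] i by (simp add: abs_square_le_1)
      finally show "(v k i)\<^sup>2 \<le> 1" .
    qed
    then show "(\<Sum>i<n. (v k i)\<^sup>2) \<le> (sqrt (real n))\<^sup>2" by simp
  qed
  have contr: "(\<Sum>\<epsilon>\<in>RS n. Max ((\<lambda>u. h u \<epsilon>) ` W))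
      \<le> (\<Sum>\<epsilon>\<in>RS n. Max ((\<lambda>u. \<Sum>i<n. \<epsilon> i * (1 * (u \<bullet> x i))) ` W))"
    unfolding h_def
    by (rule contraction[OF W(1,2), where \<phi>="\<lambda>i. \<sigma>" and v="\<lambda>u i. u \<bullet> x i"]) (use sigma_lip in simp)
  also have "\<dots> \<le> (\<Sum>\<epsilon>\<in>RS n. Max ((\<lambda>k. \<Sum>i<n. \<epsilon> i * v k i) ` K))"
    using W e by (intro sum_mono) (subst Max_le_iff, auto)
  finally have hb: "(\<Sum>\<epsilon>\<in>RS n. Max ((\<lambda>u. h u \<epsilon>) ` W)) \<le> 2 ^ n * (sqrt (2 * ln (card K)) * sqrt n)"
    using mass by linarith
  have "(\<Sum>\<epsilon>\<in>RS n. Max ((\<lambda>\<theta>. \<Sum>i<n. \<epsilon> i * nn_out \<sigma> m \<theta> (x i)) ` J))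
      \<le> (\<Sum>\<epsilon>\<in>RS n. Q * H \<epsilon>)" by (intro sum_mono a')
  also have "\<dots> \<le> (\<Sum>\<epsilon>\<in>RS n. Q * (Max ((\<lambda>u. h u \<epsilon>) ` W) + Max ((\<lambda>u. h u (negE n \<epsilon>)) ` W)))"
    using b Q0 by (intro sum_mono mult_left_mono) auto
  also have "\<dots> = Q * ((\<Sum>\<epsilon>\<in>RS n. Max ((\<lambda>u. h u \<epsilon>) ` W)) + (\<Sum>\<epsilon>\<in>RS n. Max ((\<lambda>u. h u (negE n \<epsilon>)) ` W)))"
    by (simp add: sum_distrib_left sum.distrib distrib_left)
  also have "(\<Sum>\<epsilon>\<in>RS n. Max ((\<lambda>u. h u (negE n \<epsilon>)) ` W)) = (\<Sum>\<epsilon>\<in>RS n. Max ((\<lambda>u. h u \<epsilon>) ` W))"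
    by (rule sum_RS_neg[symmetric])
  also have "Q * ((\<Sum>\<epsilon>\<in>RS n. Max ((\<lambda>u. h u \<epsilon>) ` W)) + (\<Sum>\<epsilon>\<in>RS n. Max ((\<lambda>u. h u \<epsilon>) ` W)))
      \<le> Q * (2 * (2 ^ n * (sqrt (2 * ln (card K)) * sqrt n)))"
    using hb Q0 by (intro mult_left_mono) auto
  also have "\<dots> = 2 ^ n * (2 * Q * (sqrt (2 * ln (2 * real CARD('d))) * sqrt n))"
    by (simp add: cardK)
  finally show ?thesis .
qed

end


lemma (in prob_space) abs_integral_le_const:
  fixes h :: "_ \<Rightarrow> real"
  assumes h: "h \<in> borel_measurable M" and b: "\<And>x. x \<in> space M \<Longrightarrow> \<bar>h x\<bar> \<le> K"
  shows "\<bar>\<integral>x. h x \<partial>M\<bar> \<le> K"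
proof -
  have int: "integrable M h" using b h by (intro integrable_const_bound[where B=K]) auto
  have "\<bar>\<integral>x. h x \<partial>M\<bar> \<le> (\<integral>x. \<bar>h x\<bar> \<partial>M)" by (rule integral_abs_bound)
  also have "\<dots> \<le> K" using int b by (intro integral_le_const) (auto intro!: AE_I2)
  finally show ?thesis .
qed

lemma mcdiarmid_mgf:
  fixes D :: "'a measure" and f :: "(nat \<Rightarrow> 'a) \<Rightarrow> real" and c K l :: real
  assumes D: "prob_space D" and I: "finite I"
    and f: "f \<in> borel_measurable (PiM I (\<lambda>_. D))"
    and bnd: "\<And>x. x \<in> space (PiM I (\<lambda>_. D)) \<Longrightarrow> \<bar>f x\<bar> \<le> K"
    and bd: "\<And>x i y. x \<in> space (PiM I (\<lambda>_. D)) \<Longrightarrow> i \<in> I \<Longrightarrow> y \<in> space D \<Longrightarrow> \<bar>f x - f (x(i := y))\<bar> \<le> c"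
    and l: "l > 0"
  shows "(\<integral>\<^sup>+x. exp (l * (f x - (\<integral>z. f z \<partial>PiM I (\<lambda>_. D)))) \<partial>PiM I (\<lambda>_. D))
           \<le> ennreal (exp (l\<^sup>2 * card I * c\<^sup>2 / 8))"
  using I f bnd bd
proof (induction I arbitrary: f rule: finite_induct)
  case empty
  interpret P: prob_space "PiM ({}::nat set) (\<lambda>_. D)" by (rule prob_space_PiM) (use D in auto)
  have sp: "space (PiM ({}::nat set) (\<lambda>_. D)) = {\<lambda>_. undefined}" by (simp add: space_PiM)
  have int: "(\<integral>z. f z \<partial>PiM ({}::nat set) (\<lambda>_. D)) = f (\<lambda>_. undefined)"
    by (simp add: PiM_empty lebesgue_integral_count_space_finite)
  have "(\<integral>\<^sup>+x. exp (l * (f x - (\<integral>z. f z \<partial>PiM ({}::nat set) (\<lambda>_. D)))) \<partial>PiM ({}::nat set) (\<lambda>_. D))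
      = (\<integral>\<^sup>+x. 1 \<partial>PiM ({}::nat set) (\<lambda>_. D))"
    by (rule nn_integral_cong) (auto simp: sp int)
  also have "\<dots> = 1" by (simp add: P.emeasure_space_1)
  finally show ?case by simp
next
  case (insert i I)
  interpret D: prob_space D by (rule D)
  interpret PS: product_sigma_finite "\<lambda>_. D"
    by (simp add: product_sigma_finite_def D.sigma_finite_measure_axioms)
  let ?P = "PiM I (\<lambda>_. D)"
  let ?P' = "PiM (insert i I) (\<lambda>_. D)"
  interpret P: prob_space ?P by (rule prob_space_PiM) (use D in auto)
  interpret P': prob_space ?P' by (rule prob_space_PiM) (use D in auto)
  interpret PD: pair_sigma_finite ?P D
    by (simp add: pair_sigma_finite_def P.sigma_finite_measure_axioms D.sigma_finite_measure_axioms)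
  have fm[measurable]: "f \<in> borel_measurable ?P'" by fact
  have upd[measurable]: "(\<lambda>(x, y). x(i := y)) \<in> measurable (?P \<Otimes>\<^sub>M D) ?P'"
    using measurable_add_dim[of i I "\<lambda>_. D"] by simp
  have fm2[measurable]: "(\<lambda>(x, y). f (x(i := y))) \<in> borel_measurable (?P \<Otimes>\<^sub>M D)"
    using measurable_comp[OF upd fm] by (simp add: comp_def case_prod_beta)
  have sp_upd: "x(i := y) \<in> space ?P'" if "x \<in> space ?P" "y \<in> space D" for x y
    using that by (auto simp: space_PiM PiE_def extensional_def Pi_def)
  define g where "g x = (\<integral>y. f (x(i := y)) \<partial>D)" for x
  have hm[measurable]: "(\<lambda>y. f (x(i := y))) \<in> borel_measurable D" if "x \<in> space ?P" for x
    using measurable_comp[OF measurable_component_update[OF that insert.hyps(2)] fm]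
    by (simp add: comp_def)
  have gm[measurable]: "g \<in> borel_measurable ?P"
    unfolding g_def using D.borel_measurable_lebesgue_integral[OF fm2] by simp
  have hb: "\<bar>f (x(i := y))\<bar> \<le> K" if "x \<in> space ?P" "y \<in> space D" for x y
    using insert.prems(2)[OF sp_upd[OF that]] .
  have gb: "\<bar>g x\<bar> \<le> K" if "x \<in> space ?P" for x
    unfolding g_def by (rule D.abs_integral_le_const[OF hm[OF that] hb[OF that]])
  have hint: "integrable D (\<lambda>y. f (x(i := y)))" if "x \<in> space ?P" for x
    using hb[OF that] hm[OF that] by (intro D.integrable_const_bound[where B=K]) auto
  have gd: "\<bar>g x - g (x(j := y'))\<bar> \<le> c" if x: "x \<in> space ?P" and j: "j \<in> I" and y': "y' \<in> space D" for x j y'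
  proof -
    have x': "x(j := y') \<in> space ?P" using x j y' by (auto simp: space_PiM PiE_def extensional_def Pi_def)
    have ij: "i \<noteq> j" using insert.hyps(2) j by auto
    have "g x - g (x(j := y')) = (\<integral>y. f (x(i := y)) - f ((x(i := y))(j := y')) \<partial>D)"
      unfolding g_def using hint[OF x] hint[OF x'] ij
      by (subst Bochner_Integration.integral_diff) (auto simp: fun_upd_twist)
    also have "\<bar>\<dots>\<bar> \<le> c"
    proof (rule D.abs_integral_le_const)
      show "(\<lambda>y. f (x(i := y)) - f ((x(i := y))(j := y'))) \<in> borel_measurable D"
        using hm[OF x] hm[OF x'] ij by (simp add: fun_upd_twist)
      show "\<bar>f (x(i := y)) - f ((x(i := y))(j := y'))\<bar> \<le> c" if "y \<in> space D" for y
        by (rule insert.prems(3)[OF sp_upd[OF x that]]) (use j y' in auto)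
    qed
    finally show ?thesis .
  qed
  have IH: "(\<integral>\<^sup>+x. exp (l * (g x - (\<integral>z. g z \<partial>?P))) \<partial>?P) \<le> ennreal (exp (l\<^sup>2 * card I * c\<^sup>2 / 8))"
    by (rule insert.IH[OF gm gb gd])
  have fint: "integrable ?P' f"
    using insert.prems(2) by (intro P'.integrable_const_bound[where B=K]) auto
  have Eeq: "(\<integral>z. f z \<partial>?P') = (\<integral>z. g z \<partial>?P)"
    unfolding g_def by (rule PS.product_integral_insert[OF insert.hyps fint])
  define Ef where "Ef = (\<integral>z. f z \<partial>?P')"
  have "(\<integral>\<^sup>+x. exp (l * (f x - Ef)) \<partial>?P')
      = (\<integral>\<^sup>+x. (\<integral>\<^sup>+y. exp (l * (f (x(i := y)) - Ef)) \<partial>D) \<partial>?P)"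
    by (rule PS.product_nn_integral_insert[OF insert.hyps]) measurable
  also have "\<dots> \<le> (\<integral>\<^sup>+x. ennreal (exp (l * (g x - Ef))) * ennreal (exp (l\<^sup>2 * c\<^sup>2 / 8)) \<partial>?P)"
  proof (intro nn_integral_mono)
    fix x assume x: "x \<in> space ?P"
    define a where "a = Inf ((\<lambda>y. f (x(i := y))) ` space D)"
    have ne: "space D \<noteq> {}" by (rule D.not_empty)
    have bdd: "bdd_below ((\<lambda>y. f (x(i := y))) ` space D)"
      using hb[OF x] by (intro bdd_belowI[where m="-K"]) (force simp: abs_le_iff)
    have inter: "f (x(i := y)) \<in> {a..a + c}" if y: "y \<in> space D" for y
    proof -
      have lo: "a \<le> f (x(i := y))" unfolding a_def using bdd y by (intro cInf_lower) auto
      have "f (x(i := y)) - c \<le> a" unfolding a_def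
      proof (rule cInf_greatest)
        show "(\<lambda>y. f (x(i := y))) ` space D \<noteq> {}" using ne by auto
        fix z assume "z \<in> (\<lambda>y. f (x(i := y))) ` space D"
        then obtain y' where y': "y' \<in> space D" "z = f (x(i := y'))" by auto
        have "\<bar>f (x(i := y)) - f ((x(i := y))(i := y'))\<bar> \<le> c"
          using insert.prems(3)[OF sp_upd[OF x y] insertI1 y'(1)] by (simp add: fun_upd_def)
        then show "f (x(i := y)) - c \<le> z" using y' by simp
      qed
      then show ?thesis using lo by simp
    qed
    interpret H: interval_bounded_random_variable D "\<lambda>y. f (x(i := y))" a "a + c"
      by unfold_locales (use hm[OF x] inter in \<open>auto intro!: AE_I2\<close>)
    have hoef: "(\<integral>\<^sup>+y. exp (l * (f (x(i := y)) - g x)) \<partial>D) \<le> ennreal (exp (l\<^sup>2 * c\<^sup>2 / 8))"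
      using H.Hoeffdings_lemma_nn_integral[OF l] unfolding g_def by simp
    have "(\<integral>\<^sup>+y. exp (l * (f (x(i := y)) - Ef)) \<partial>D)
        = (\<integral>\<^sup>+y. ennreal (exp (l * (g x - Ef))) * exp (l * (f (x(i := y)) - g x)) \<partial>D)"
      by (intro nn_integral_cong) (simp add: ennreal_mult'[symmetric] flip: exp_add; simp add: algebra_simps)
    also have "\<dots> = ennreal (exp (l * (g x - Ef))) * (\<integral>\<^sup>+y. exp (l * (f (x(i := y)) - g x)) \<partial>D)"
      by (rule nn_integral_cmult) measurable
    also have "\<dots> \<le> ennreal (exp (l * (g x - Ef))) * ennreal (exp (l\<^sup>2 * c\<^sup>2 / 8))"
      by (intro mult_left_mono hoef) auto
    finally show "(\<integral>\<^sup>+y. exp (l * (f (x(i := y)) - Ef)) \<partial>D)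
        \<le> ennreal (exp (l * (g x - Ef))) * ennreal (exp (l\<^sup>2 * c\<^sup>2 / 8))" .
  qed
  also have "\<dots> = (\<integral>\<^sup>+x. ennreal (exp (l * (g x - Ef))) \<partial>?P) * ennreal (exp (l\<^sup>2 * c\<^sup>2 / 8))"
    by (rule nn_integral_multc) measurable
  also have "\<dots> \<le> ennreal (exp (l\<^sup>2 * card I * c\<^sup>2 / 8)) * ennreal (exp (l\<^sup>2 * c\<^sup>2 / 8))"
    using IH by (intro mult_right_mono) (auto simp: Ef_def Eeq)
  also have "\<dots> = ennreal (exp (l\<^sup>2 * card (insert i I) * c\<^sup>2 / 8))"
    using insert.hyps by (simp add: ennreal_mult'[symmetric] flip: exp_add; simp add: algebra_simps add_divide_distrib)
  finally show ?case by (simp add: Ef_def)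
qed


lemma PiM_perm:
  fixes D :: "'a measure"
  assumes D: "prob_space D" and K: "finite K" and \<pi>: "bij_betw \<pi> K K"
  shows "distr (PiM K (\<lambda>_. D)) (PiM K (\<lambda>_. D)) (\<lambda>\<omega>. \<lambda>k\<in>K. \<omega> (\<pi> k)) = PiM K (\<lambda>_. D)"
proof -
  interpret D: prob_space D by (rule D)
  interpret PS: product_sigma_finite "\<lambda>_::'i. D"
    by (simp add: product_sigma_finite_def D.sigma_finite_measure_axioms)
  have meas: "(\<lambda>\<omega>. \<lambda>k\<in>K. \<omega> (\<pi> k)) \<in> measurable (PiM K (\<lambda>_. D)) (PiM K (\<lambda>_. D))"
    using \<pi> by (intro measurable_restrict measurable_component_singleton) (auto simp: bij_betw_def)
  define \<rho> where "\<rho> = inv_into K \<pi>"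
  have \<rho>: "bij_betw \<rho> K K" unfolding \<rho>_def by (rule bij_betw_inv_into[OF \<pi>])
  have \<pi>\<rho>: "\<pi> (\<rho> k) = k" if "k \<in> K" for k
    unfolding \<rho>_def using that \<pi> by (simp add: bij_betw_inv_into_right)
  have \<rho>\<pi>: "\<rho> (\<pi> k) = k" if "k \<in> K" for k
    unfolding \<rho>_def using that \<pi> by (simp add: bij_betw_inv_into_left)
  have \<pi>K: "\<pi> k \<in> K" if "k \<in> K" for k using \<pi> that by (auto simp: bij_betw_def)
  have \<rho>K: "\<rho> k \<in> K" if "k \<in> K" for k using \<rho> that by (auto simp: bij_betw_def)
  show ?thesis
  proof (rule PS.PiM_eqI[OF K])
    show "sets (distr (PiM K (\<lambda>_. D)) (PiM K (\<lambda>_. D)) (\<lambda>\<omega>. \<lambda>k\<in>K. \<omega> (\<pi> k))) = sets (PiM K (\<lambda>_. D))"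
      by simp
    fix A assume A: "\<And>i. i \<in> K \<Longrightarrow> A i \<in> sets D"
    have Asp: "A i \<subseteq> space D" if "i \<in> K" for i using A[OF that] sets.sets_into_space by auto
    have pre: "(\<lambda>\<omega>. \<lambda>k\<in>K. \<omega> (\<pi> k)) -` PiE K A \<inter> space (PiM K (\<lambda>_. D)) = PiE K (\<lambda>k. A (\<rho> k))"
    proof (intro equalityI subsetI)
      fix \<omega> assume \<omega>: "\<omega> \<in> (\<lambda>\<omega>. \<lambda>k\<in>K. \<omega> (\<pi> k)) -` PiE K A \<inter> space (PiM K (\<lambda>_. D))"
      show "\<omega> \<in> PiE K (\<lambda>k. A (\<rho> k))"
      proof (rule PiE_I)
        fix k assume k: "k \<in> K"
        have "(\<lambda>k\<in>K. \<omega> (\<pi> k)) (\<rho> k) \<in> A (\<rho> k)" using \<omega> \<rho>K[OF k] by (auto simp: PiE_def Pi_def)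
        then show "\<omega> k \<in> A (\<rho> k)" using \<rho>K[OF k] \<pi>\<rho>[OF k] by simp
      next
        fix k assume "k \<notin> K" then show "\<omega> k = undefined" using \<omega> by (auto simp: space_PiM PiE_def extensional_def)
      qed
    next
      fix \<omega> assume \<omega>: "\<omega> \<in> PiE K (\<lambda>k. A (\<rho> k))"
      have "\<omega> \<in> space (PiM K (\<lambda>_. D))"
        using \<omega> Asp \<rho>K unfolding space_PiM by (force simp: PiE_def Pi_def)
      moreover have "(\<lambda>k\<in>K. \<omega> (\<pi> k)) \<in> PiE K A"
        using \<omega> \<pi>K \<rho>\<pi> by (fastforce simp: PiE_def Pi_def)
      ultimately show "\<omega> \<in> (\<lambda>\<omega>. \<lambda>k\<in>K. \<omega> (\<pi> k)) -` PiE K A \<inter> space (PiM K (\<lambda>_. D))" by simp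
    qed
    have "emeasure (distr (PiM K (\<lambda>_. D)) (PiM K (\<lambda>_. D)) (\<lambda>\<omega>. \<lambda>k\<in>K. \<omega> (\<pi> k))) (PiE K A)
        = emeasure (PiM K (\<lambda>_. D)) (PiE K (\<lambda>k. A (\<rho> k)))"
      using A by (subst emeasure_distr[OF meas]) (auto simp: pre intro!: sets_PiM_I_finite K)
    also have "\<dots> = (\<Prod>k\<in>K. emeasure D (A (\<rho> k)))"
      using A \<rho>K by (subst PS.emeasure_PiM[OF K]) auto
    also have "\<dots> = (\<Prod>k\<in>K. emeasure D (A k))"
      using prod.reindex_bij_betw[OF \<rho>, of "\<lambda>k. emeasure D (A k)"] by simp
    finally show "emeasure (distr (PiM K (\<lambda>_. D)) (PiM K (\<lambda>_. D)) (\<lambda>\<omega>. \<lambda>k\<in>K. \<omega> (\<pi> k))) (PiE K A)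
        = (\<Prod>k\<in>K. emeasure D (A k))" .
  qed
qed

lemma PiM_integral_coord:
  fixes D :: "'a measure" and h :: "'a \<Rightarrow> real"
  assumes D: "prob_space D" and J: "finite J" "k \<in> J"
    and h: "h \<in> borel_measurable D" and hb: "\<And>z. z \<in> space D \<Longrightarrow> \<bar>h z\<bar> \<le> B"
  shows "(\<integral>y. h (y k) \<partial>PiM J (\<lambda>_. D)) = (\<integral>z. h z \<partial>D)"
proof -
  interpret D: prob_space D by (rule D)
  interpret PS: product_sigma_finite "\<lambda>_::'i. D"
    by (simp add: product_sigma_finite_def D.sigma_finite_measure_axioms)
  interpret P: prob_space "PiM J (\<lambda>_. D)" by (rule prob_space_PiM) (use D in auto)
  interpret P2: prob_space "PiM (J - {k}) (\<lambda>_. D)" by (rule prob_space_PiM) (use D in auto)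
  have Jk: "J = insert k (J - {k})" using J by auto
  have int: "integrable (PiM (insert k (J - {k})) (\<lambda>_. D)) (\<lambda>y. h (y k))"
    unfolding Jk[symmetric]
    using hb J measurable_compose[OF measurable_component_singleton[OF J(2)] h]
    by (intro P.integrable_const_bound[where B=B]) (auto simp: space_PiM PiE_def Pi_def)
  have "(\<integral>y. h (y k) \<partial>PiM J (\<lambda>_. D)) = (\<integral>y. h (y k) \<partial>PiM (insert k (J - {k})) (\<lambda>_. D))"
    using Jk by simp
  also have "\<dots> = (\<integral>x. (\<integral>y. h ((x(k := y)) k) \<partial>D) \<partial>PiM (J - {k}) (\<lambda>_. D))"
    by (rule PS.product_integral_insert[OF _ _ int]) (use J in auto)
  also have "\<dots> = (\<integral>z. h z \<partial>D)" by (simp add: P2.prob_space)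
  finally show ?thesis .
qed


lemma abs_Max_le:
  assumes "finite J" "J \<noteq> {}" "\<And>j. j \<in> J \<Longrightarrow> \<bar>f j\<bar> \<le> (C::real)"
  shows "\<bar>Max (f ` J)\<bar> \<le> C"
proof -
  obtain j0 where "j0 \<in> J" "Max (f ` J) = f j0" using Max_img_ex[OF assms(1,2)] by blast
  then show ?thesis using assms(3) by simp
qed

lemma Max_add_le:
  fixes f h :: "'j \<Rightarrow> real"
  assumes "finite J" "J \<noteq> {}"
  shows "Max ((\<lambda>j. f j + h j) ` J) \<le> Max (f ` J) + Max (h ` J)"
proof -
  obtain j0 where j0: "j0 \<in> J" "Max ((\<lambda>j. f j + h j) ` J) = f j0 + h j0"
    using Max_img_ex[OF assms, of "\<lambda>j. f j + h j"] by blast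
  have "f j0 \<le> Max (f ` J)" "h j0 \<le> Max (h ` J)" using assms j0 by (auto intro!: Max_ge)
  then show ?thesis using j0 by simp
qed

lemma Max_diff_le:
  fixes f h :: "'j \<Rightarrow> real"
  assumes "finite J" "J \<noteq> {}" "\<And>j. j \<in> J \<Longrightarrow> \<bar>f j - h j\<bar> \<le> C"
  shows "\<bar>Max (f ` J) - Max (h ` J)\<bar> \<le> C"
proof -
  obtain j1 where j1: "j1 \<in> J" "Max (f ` J) = f j1" using Max_img_ex[OF assms(1,2)] by blast
  obtain j2 where j2: "j2 \<in> J" "Max (h ` J) = h j2" using Max_img_ex[OF assms(1,2)] by blast
  have "f j2 \<le> Max (f ` J)" by (rule Max_ge) (use assms(1) j2(1) in auto)
  moreover have "h j1 \<le> Max (h ` J)" by (rule Max_ge) (use assms(1) j1(1) in auto)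
  moreover have "\<bar>f j1 - h j1\<bar> \<le> C" "\<bar>f j2 - h j2\<bar> \<le> C" using assms(3) j1(1) j2(1) by auto
  ultimately show ?thesis unfolding j1(2) j2(2) by (simp add: abs_le_iff)
qed

definition swp :: "nat \<Rightarrow> (nat \<Rightarrow> real) \<Rightarrow> nat \<Rightarrow> nat" where
  "swp n \<epsilon> k = (if k < n \<and> \<epsilon> k = -1 then k + n
                 else if n \<le> k \<and> k < 2 * n \<and> \<epsilon> (k - n) = -1 then k - n else k)"

lemma swp_bij: "bij_betw (swp n \<epsilon>) {..<2*n} {..<2*n}"
proof (rule bij_betw_byWitness[where f'="swp n \<epsilon>"])
  show "\<forall>a\<in>{..<2 * n}. swp n \<epsilon> (swp n \<epsilon> a) = a" by (auto simp: swp_def)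
  show "\<forall>a\<in>{..<2 * n}. swp n \<epsilon> (swp n \<epsilon> a) = a" by (auto simp: swp_def)
  show "swp n \<epsilon> ` {..<2 * n} \<subseteq> {..<2 * n}" by (auto simp: swp_def)
  show "swp n \<epsilon> ` {..<2 * n} \<subseteq> {..<2 * n}" by (auto simp: swp_def)
qed

lemma symmetrization:
  fixes D :: "'z measure" and g :: "'j \<Rightarrow> 'z \<Rightarrow> real"
  assumes D: "prob_space D" and n: "n > 0" and J: "finite J" "J \<noteq> {}"
    and gm: "\<And>j. j \<in> J \<Longrightarrow> g j \<in> borel_measurable D"
    and gb: "\<And>j z. j \<in> J \<Longrightarrow> z \<in> space D \<Longrightarrow> \<bar>g j z\<bar> \<le> B"
    and rad: "\<And>z. (\<And>i. i < n \<Longrightarrow> z i \<in> space D) \<Longrightarrow>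
        (\<Sum>\<epsilon>\<in>RS n. Max ((\<lambda>j. \<Sum>i<n. \<epsilon> i * g j (z i)) ` J)) \<le> 2 ^ n * (n * R)"
  shows "(\<integral>S. Max ((\<lambda>j. (\<integral>z. g j z \<partial>D) - (1 / n) * (\<Sum>i<n. g j (S i))) ` J) \<partial>PiM {..<n} (\<lambda>_. D))
           \<le> 2 * R"
proof -
  interpret D: prob_space D by (rule D)
  interpret PS: product_sigma_finite "\<lambda>_::nat. D"
    by (simp add: product_sigma_finite_def D.sigma_finite_measure_axioms)
  define I where "I = {..<n}"
  define J' where "J' = {n..<2*n}"
  define K where "K = I \<union> J'"
  have K2: "K = {..<2*n}" by (auto simp: K_def I_def J'_def)
  let ?P = "PiM K (\<lambda>_. D)"
  let ?M = "PiM I (\<lambda>_. D)"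
  let ?N = "PiM J' (\<lambda>_. D)"
  interpret P: prob_space ?P by (rule prob_space_PiM) (use D in auto)
  interpret M: prob_space ?M by (rule prob_space_PiM) (use D in auto)
  interpret N: prob_space ?N by (rule prob_space_PiM) (use D in auto)
  interpret MN: pair_sigma_finite ?M ?N
    by (simp add: pair_sigma_finite_def M.sigma_finite_measure_axioms N.sigma_finite_measure_axioms)
  have finK: "finite K" "finite I" "finite J'" "I \<inter> J' = {}" by (auto simp: K_def I_def J'_def)
  define G where "G \<omega> = (1 / n) * Max ((\<lambda>j. \<Sum>i<n. (g j (\<omega> (n + i)) - g j (\<omega> i))) ` J)" for \<omega>
  define \<Phi> where "\<Phi> S = Max ((\<lambda>j. (\<integral>z. g j z \<partial>D) - (1 / n) * (\<Sum>i<n. g j (S i))) ` J)" for S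
  have coord: "(\<lambda>\<omega>. g j (\<omega> k)) \<in> borel_measurable (PiM L (\<lambda>_. D))" if "j \<in> J" "k \<in> L" for j k L
    by (rule measurable_compose[OF measurable_component_singleton[OF that(2)] gm[OF that(1)]])
  have inK: "i \<in> K" "n + i \<in> K" if "i < n" for i using that by (auto simp: K_def I_def J'_def)
  have Gm: "G \<in> borel_measurable ?P"
    unfolding G_def using J
    by (intro borel_measurable_times borel_measurable_const borel_measurable_Max borel_measurable_sum
          borel_measurable_diff coord inK) auto
  have spP: "\<omega> k \<in> space D" if "\<omega> \<in> space ?P" "k \<in> K" for \<omega> k
    using that by (auto simp: space_PiM PiE_def Pi_def)
  have Gb: "\<bar>G \<omega>\<bar> \<le> 2 * B" if "\<omega> \<in> space ?P" for \<omega>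
  proof -
    have "\<bar>Max ((\<lambda>j. \<Sum>i<n. (g j (\<omega> (n + i)) - g j (\<omega> i))) ` J)\<bar> \<le> n * (2 * B)"
    proof (rule abs_Max_le[OF J])
      fix j assume j: "j \<in> J"
      have "\<bar>\<Sum>i<n. (g j (\<omega> (n + i)) - g j (\<omega> i))\<bar> \<le> (\<Sum>i<n. \<bar>g j (\<omega> (n + i)) - g j (\<omega> i)\<bar>)"
        by (rule sum_abs)
      also have "\<dots> \<le> (\<Sum>i<n. 2 * B)"
      proof (intro sum_mono)
        fix i assume "i \<in> {..<n}"
        then have "\<bar>g j (\<omega> (n + i))\<bar> \<le> B" "\<bar>g j (\<omega> i)\<bar> \<le> B"
          using gb[OF j spP[OF that]] inK by auto
        then show "\<bar>g j (\<omega> (n + i)) - g j (\<omega> i)\<bar> \<le> 2 * B" by linarith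
      qed
      finally show "\<bar>\<Sum>i<n. (g j (\<omega> (n + i)) - g j (\<omega> i))\<bar> \<le> n * (2 * B)" by simp
    qed
    then show ?thesis using n unfolding G_def by (simp add: abs_mult field_simps)
  qed
  have Gint: "integrable ?P G" using Gb Gm by (intro P.integrable_const_bound[where B="2*B"]) auto
  have mergeK: "I \<union> J' = K" by (simp add: K_def)
  have step1: "(\<integral>\<omega>. G \<omega> \<partial>?P) = (\<integral>x. (\<integral>y. G (merge I J' (x, y)) \<partial>?N) \<partial>?M)"
    unfolding mergeK[symmetric] by (rule PS.product_integral_fold) (use finK Gint mergeK in auto)
  have Gmerge: "(\<lambda>p. G (merge I J' p)) \<in> borel_measurable (?M \<Otimes>\<^sub>M ?N)"
    using measurable_comp[OF measurable_merge[of I J' "\<lambda>_. D"] Gm[unfolded mergeK[symmetric]]]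
    by (simp add: comp_def mergeK)
  have inner_m: "(\<lambda>x. \<integral>y. G (merge I J' (x, y)) \<partial>?N) \<in> borel_measurable ?M"
    using N.borel_measurable_lebesgue_integral[of "\<lambda>x y. G (merge I J' (x, y))"] Gmerge by simp
  have merge_sp: "merge I J' (x, y) \<in> space ?P" if "x \<in> space ?M" "y \<in> space ?N" for x y
    using that by (auto simp: space_PiM K_def PiE_def Pi_def merge_def extensional_def)
  have inner_y_m: "(\<lambda>y. G (merge I J' (x, y))) \<in> borel_measurable ?N" if "x \<in> space ?M" for x
    using measurable_comp[OF measurable_Pair1'[OF that] Gmerge] by (simp add: comp_def)
  have inner_b: "\<bar>\<integral>y. G (merge I J' (x, y)) \<partial>?N\<bar> \<le> 2 * B" if "x \<in> space ?M" for x
    by (rule N.abs_integral_le_const[OF inner_y_m[OF that]]) (use Gb merge_sp that in auto)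
  have step2: "\<Phi> x \<le> (\<integral>y. G (merge I J' (x, y)) \<partial>?N)" if x: "x \<in> space ?M" for x
  proof -
    obtain j0 where j0: "j0 \<in> J"
      "\<Phi> x = (\<integral>z. g j0 z \<partial>D) - (1 / n) * (\<Sum>i<n. g j0 (x i))"
      using Max_img_ex[OF J] unfolding \<Phi>_def by blast
    have spx: "x i \<in> space D" if "i < n" for i using x that by (auto simp: space_PiM PiE_def Pi_def I_def)
    have ci: "(\<integral>y. g j0 (y (n + i)) \<partial>?N) = (\<integral>z. g j0 z \<partial>D)" if "i < n" for i
      by (rule PiM_integral_coord[OF D finK(3) _ gm[OF j0(1)] gb[OF j0(1)]]) (use that in \<open>auto simp: J'_def\<close>)
    have cint: "integrable ?N (\<lambda>y. g j0 (y (n + i)))" if "i < n" for i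
    proof (rule N.integrable_const_bound[where B=B])
      show "AE y in ?N. norm (g j0 (y (n + i))) \<le> B"
        using that gb[OF j0(1)] by (intro AE_I2) (auto simp: space_PiM PiE_def Pi_def J'_def)
      show "(\<lambda>y. g j0 (y (n + i))) \<in> borel_measurable ?N"
        by (rule coord[OF j0(1)]) (use that in \<open>auto simp: J'_def\<close>)
    qed
    have "(\<integral>y. (1 / n) * (\<Sum>i<n. (g j0 (y (n + i)) - g j0 (x i))) \<partial>?N)
        = (1 / n) * (\<Sum>i<n. ((\<integral>z. g j0 z \<partial>D) - g j0 (x i)))"
      using cint ci by (simp add: Bochner_Integration.integral_sum Bochner_Integration.integral_diff N.prob_space)
    also have "\<dots> = \<Phi> x" using n j0 by (simp add: sum_subtractf field_simps)
    finally have eq: "(\<integral>y. (1 / n) * (\<Sum>i<n. (g j0 (y (n + i)) - g j0 (x i))) \<partial>?N) = \<Phi> x" .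
    have "(\<integral>y. (1 / n) * (\<Sum>i<n. (g j0 (y (n + i)) - g j0 (x i))) \<partial>?N) \<le> (\<integral>y. G (merge I J' (x, y)) \<partial>?N)"
    proof (rule integral_mono)
      show "integrable ?N (\<lambda>y. (1 / n) * (\<Sum>i<n. (g j0 (y (n + i)) - g j0 (x i))))"
        using cint by (intro integrable_mult_right integrable_sum Bochner_Integration.integrable_diff integrable_const) auto
      show "integrable ?N (\<lambda>y. G (merge I J' (x, y)))"
        using inner_y_m[OF x] Gb merge_sp[OF x]
        by (intro N.integrable_const_bound[where B="2*B"]) (auto intro!: AE_I2)
      fix y assume y: "y \<in> space ?N"
      have mv: "merge I J' (x, y) (n + i) = y (n + i)" "merge I J' (x, y) i = x i" if "i < n" for i
        using that by (auto simp: merge_def I_def J'_def)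
      have "(\<Sum>i<n. (g j0 (y (n + i)) - g j0 (x i)))
          \<le> Max ((\<lambda>j. \<Sum>i<n. (g j (merge I J' (x, y) (n + i)) - g j (merge I J' (x, y) i))) ` J)"
        using J j0(1) mv by (intro Max_ge) (auto intro!: image_eqI[where x=j0] sum.cong)
      then show "(1 / n) * (\<Sum>i<n. (g j0 (y (n + i)) - g j0 (x i))) \<le> G (merge I J' (x, y))"
        unfolding G_def using n by (intro mult_left_mono) auto
    qed
    then show ?thesis using eq by simp
  qed
  have \<Phi>m: "\<Phi> \<in> borel_measurable ?M"
    unfolding \<Phi>_def using J
    by (intro borel_measurable_Max borel_measurable_times borel_measurable_const borel_measurable_sum
          borel_measurable_diff coord) (auto simp: I_def)
  have \<Phi>b: "\<bar>\<Phi> S\<bar> \<le> 2 * B" if "S \<in> space ?M" for S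
    unfolding \<Phi>_def
  proof (rule abs_Max_le[OF J])
    fix j assume j: "j \<in> J"
    have c: "\<bar>\<integral>z. g j z \<partial>D\<bar> \<le> B" by (rule D.abs_integral_le_const[OF gm[OF j] gb[OF j]])
    have "\<bar>\<Sum>i<n. g j (S i)\<bar> \<le> (\<Sum>i<n. B)"
      using that gb[OF j] by (intro order.trans[OF sum_abs] sum_mono) (auto simp: space_PiM PiE_def Pi_def I_def)
    then have "\<bar>(1 / n) * (\<Sum>i<n. g j (S i))\<bar> \<le> B" using n by (simp add: abs_mult field_simps)
    then show "\<bar>(\<integral>z. g j z \<partial>D) - (1 / n) * (\<Sum>i<n. g j (S i))\<bar> \<le> 2 * B" using c by linarith
  qed
  have A1: "(\<integral>S. \<Phi> S \<partial>?M) \<le> (\<integral>\<omega>. G \<omega> \<partial>?P)"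
    unfolding step1
  proof (rule integral_mono)
    show "integrable ?M \<Phi>" using \<Phi>b \<Phi>m by (intro M.integrable_const_bound[where B="2*B"]) auto
    show "integrable ?M (\<lambda>x. \<integral>y. G (merge I J' (x, y)) \<partial>?N)"
      using inner_b inner_m by (intro M.integrable_const_bound[where B="2*B"]) auto
  qed (rule step2)
  define sw :: "(nat \<Rightarrow> real) \<Rightarrow> (nat \<Rightarrow> 'z) \<Rightarrow> nat \<Rightarrow> 'z" where "sw \<epsilon> \<omega> = (\<lambda>k\<in>K. \<omega> (swp n \<epsilon> k))" for \<epsilon> \<omega>
  have swm: "sw \<epsilon> \<in> measurable ?P ?P" for \<epsilon>
    unfolding sw_def using swp_bij[of n \<epsilon>] unfolding K2[symmetric]
    by (intro measurable_restrict measurable_component_singleton) (auto simp: bij_betw_def)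
  have step3: "(\<integral>\<omega>. G \<omega> \<partial>?P) = (\<integral>\<omega>. G (sw \<epsilon> \<omega>) \<partial>?P)" for \<epsilon>
  proof -
    have "distr ?P ?P (sw \<epsilon>) = ?P"
      unfolding sw_def K2 by (rule PiM_perm[OF D _ swp_bij]) simp
    then have "(\<integral>\<omega>. G \<omega> \<partial>?P) = (\<integral>\<omega>. G \<omega> \<partial>distr ?P ?P (sw \<epsilon>))" by simp
    also have "\<dots> = (\<integral>\<omega>. G (sw \<epsilon> \<omega>) \<partial>?P)" by (rule integral_distr[OF swm Gm])
    finally show ?thesis .
  qed
  have step4: "G (sw \<epsilon> \<omega>) = (1 / n) * Max ((\<lambda>j. \<Sum>i<n. \<epsilon> i * (g j (\<omega> (n + i)) - g j (\<omega> i))) ` J)"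
    if e: "\<epsilon> \<in> RS n" for \<epsilon> \<omega>
  proof -
    have "(\<Sum>i<n. (g j (sw \<epsilon> \<omega> (n + i)) - g j (sw \<epsilon> \<omega> i))) = (\<Sum>i<n. \<epsilon> i * (g j (\<omega> (n + i)) - g j (\<omega> i)))" for j
    proof (rule sum.cong[OF refl])
      fix i assume i: "i \<in> {..<n}"
      have "\<epsilon> i = 1 \<or> \<epsilon> i = -1" using RS_val[OF e] i by auto
      then show "g j (sw \<epsilon> \<omega> (n + i)) - g j (sw \<epsilon> \<omega> i) = \<epsilon> i * (g j (\<omega> (n + i)) - g j (\<omega> i))"
        using i inK[of i] by (auto simp: sw_def swp_def add.commute)
    qed
    then show ?thesis unfolding G_def by simp
  qed
  have swint: "integrable ?P (\<lambda>\<omega>. G (sw \<epsilon> \<omega>))" for \<epsilon>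
  proof (rule P.integrable_const_bound[where B="2*B"])
    show "AE x in ?P. norm (G (sw \<epsilon> x)) \<le> 2 * B"
      using Gb measurable_space[OF swm] by (intro AE_I2) auto
    show "(\<lambda>\<omega>. G (sw \<epsilon> \<omega>)) \<in> borel_measurable ?P"
      using measurable_comp[OF swm Gm] by (simp add: comp_def)
  qed
  have cardRS: "card (RS n) = (2::real) ^ n" by (simp add: card_RS)
  have "(\<integral>\<omega>. G \<omega> \<partial>?P) = (1 / 2 ^ n) * (\<Sum>\<epsilon>\<in>RS n. (\<integral>\<omega>. G \<omega> \<partial>?P))"
    by (simp add: cardRS)
  also have "\<dots> = (1 / 2 ^ n) * (\<Sum>\<epsilon>\<in>RS n. (\<integral>\<omega>. G (sw \<epsilon> \<omega>) \<partial>?P))"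
    using step3 by simp
  also have "\<dots> = (\<integral>\<omega>. (1 / 2 ^ n) * (\<Sum>\<epsilon>\<in>RS n. G (sw \<epsilon> \<omega>)) \<partial>?P)"
    using swint by (simp add: Bochner_Integration.integral_sum)
  also have "\<dots> \<le> (\<integral>\<omega>. 2 * R \<partial>?P)"
  proof (rule integral_mono)
    show "integrable ?P (\<lambda>\<omega>. (1 / 2 ^ n) * (\<Sum>\<epsilon>\<in>RS n. G (sw \<epsilon> \<omega>)))" using swint by auto
    show "integrable ?P (\<lambda>\<omega>. 2 * R)" by simp
    fix \<omega> assume \<omega>: "\<omega> \<in> space ?P"
    define a where "a j i = g j (\<omega> (n + i))" for j i
    define b where "b j i = g j (\<omega> i)" for j i
    have sa: "(\<Sum>\<epsilon>\<in>RS n. Max ((\<lambda>j. \<Sum>i<n. \<epsilon> i * a j i) ` J)) \<le> 2 ^ n * (n * R)"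
      unfolding a_def by (rule rad) (use spP[OF \<omega>] inK in auto)
    have sb: "(\<Sum>\<epsilon>\<in>RS n. Max ((\<lambda>j. \<Sum>i<n. \<epsilon> i * b j i) ` J)) \<le> 2 ^ n * (n * R)"
      unfolding b_def by (rule rad) (use spP[OF \<omega>] inK in auto)
    have "(\<Sum>\<epsilon>\<in>RS n. G (sw \<epsilon> \<omega>))
        = (1 / n) * (\<Sum>\<epsilon>\<in>RS n. Max ((\<lambda>j. (\<Sum>i<n. \<epsilon> i * a j i) + (\<Sum>i<n. negE n \<epsilon> i * b j i)) ` J))"
      using step4 by (simp add: sum_distrib_left a_def b_def negE_def algebra_simps sum.distrib sum_negf
          sum_subtractf)
    also have "\<dots> \<le> (1 / n) * (\<Sum>\<epsilon>\<in>RS n. Max ((\<lambda>j. \<Sum>i<n. \<epsilon> i * a j i) ` J)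
                                  + Max ((\<lambda>j. \<Sum>i<n. negE n \<epsilon> i * b j i) ` J))"
      using n by (intro mult_left_mono sum_mono Max_add_le[OF J]) auto
    also have "\<dots> = (1 / n) * ((\<Sum>\<epsilon>\<in>RS n. Max ((\<lambda>j. \<Sum>i<n. \<epsilon> i * a j i) ` J))
                              + (\<Sum>\<epsilon>\<in>RS n. Max ((\<lambda>j. \<Sum>i<n. \<epsilon> i * b j i) ` J)))"
      by (simp add: sum.distrib sum_RS_neg[symmetric, of "\<lambda>\<epsilon>. Max ((\<lambda>j. \<Sum>i<n. \<epsilon> i * b j i) ` J)"])
    also have "\<dots> \<le> (1 / n) * (2 ^ n * (n * R) + 2 ^ n * (n * R))"
      using sa sb n by (intro mult_left_mono add_mono) auto
    also have "\<dots> = 2 ^ n * (2 * R)" using n by (simp add: field_simps)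
    finally show "(1 / 2 ^ n) * (\<Sum>\<epsilon>\<in>RS n. G (sw \<epsilon> \<omega>)) \<le> 2 * R"
      by (simp add: field_simps)
  qed
  also have "\<dots> = 2 * R" by (simp add: P.prob_space)
  finally have "(\<integral>\<omega>. G \<omega> \<partial>?P) \<le> 2 * R" .
  then show ?thesis using A1 unfolding \<Phi>_def I_def by simp
qed


lemma mcdiarmid:
  fixes D :: "'a measure" and f :: "(nat \<Rightarrow> 'a) \<Rightarrow> real" and c K t :: real
  assumes D: "prob_space D" and I: "finite I" "I \<noteq> {}"
    and f: "f \<in> borel_measurable (PiM I (\<lambda>_. D))"
    and bnd: "\<And>x. x \<in> space (PiM I (\<lambda>_. D)) \<Longrightarrow> \<bar>f x\<bar> \<le> K"
    and bd: "\<And>x i y. x \<in> space (PiM I (\<lambda>_. D)) \<Longrightarrow> i \<in> I \<Longrightarrow> y \<in> space D \<Longrightarrow> \<bar>f x - f (x(i := y))\<bar> \<le> c"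
    and t: "t > 0" and c: "c > 0"
  shows "measure (PiM I (\<lambda>_. D)) {x \<in> space (PiM I (\<lambda>_. D)). f x \<ge> (\<integral>z. f z \<partial>PiM I (\<lambda>_. D)) + t}
           \<le> exp (- 2 * t\<^sup>2 / (card I * c\<^sup>2))"
proof -
  let ?P = "PiM I (\<lambda>_. D)"
  interpret P: prob_space ?P by (rule prob_space_PiM) (use D in auto)
  define Ef where "Ef = (\<integral>z. f z \<partial>?P)"
  define d where "d = real (card I) * c\<^sup>2"
  have d: "d > 0" using I c by (simp add: d_def card_gt_0_iff)
  define l where "l = 4 * t / d"
  have l: "l > 0" using t d by (simp add: l_def)
  have fm[measurable]: "f \<in> borel_measurable ?P" by fact
  have "{x \<in> space ?P. f x \<ge> Ef + t} = {x \<in> space ?P. f x - Ef \<ge> t}" by auto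
  then have "ennreal (measure ?P {x \<in> space ?P. f x \<ge> Ef + t}) = emeasure ?P {x \<in> space ?P. f x - Ef \<ge> t}"
    by (simp add: P.emeasure_eq_measure)
  also have "\<dots> \<le> ennreal (exp (-l * t)) * (\<integral>\<^sup>+x. ennreal (exp (l * (f x - Ef))) * indicator (space ?P) x \<partial>?P)"
    by (intro Chernoff_ineq_nn_integral_ge l) auto
  also have "(\<integral>\<^sup>+x. ennreal (exp (l * (f x - Ef))) * indicator (space ?P) x \<partial>?P)
      = (\<integral>\<^sup>+x. ennreal (exp (l * (f x - Ef))) \<partial>?P)"
    by (intro nn_integral_cong) auto
  also have "\<dots> \<le> ennreal (exp (l\<^sup>2 * card I * c\<^sup>2 / 8))"
    unfolding Ef_def by (rule mcdiarmid_mgf[OF D I(1) f bnd bd l])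
  finally have "ennreal (measure ?P {x \<in> space ?P. f x \<ge> Ef + t})
      \<le> ennreal (exp (-l * t)) * ennreal (exp (l\<^sup>2 * card I * c\<^sup>2 / 8))"
    by (simp add: mult_left_mono)
  also have "\<dots> = ennreal (exp (-l * t) * exp (l\<^sup>2 * card I * c\<^sup>2 / 8))"
    by (simp add: ennreal_mult)
  also have "exp (-l * t) * exp (l\<^sup>2 * card I * c\<^sup>2 / 8) = exp (- 2 * t\<^sup>2 / (card I * c\<^sup>2))"
  proof -
    have "-l * t + l\<^sup>2 * card I * c\<^sup>2 / 8 = - 2 * t\<^sup>2 / d"
      using d by (simp add: l_def d_def field_simps power2_eq_square)
    then show ?thesis by (simp add: d_def flip: exp_add)
  qed
  finally show ?thesis by (simp add: Ef_def)
qed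

lemma diff_aux: "(A'::real) = A - a + b \<Longrightarrow> (E - (1/n)*A) - (E - (1/n)*A') = (1/n)*(b - a)"
  by (simp add: right_diff_distrib distrib_left)

lemma finite_class_bound:
  fixes D :: "'z measure" and g :: "'j \<Rightarrow> 'z \<Rightarrow> real"
  assumes D: "prob_space D" and n: "n > 0" and J: "finite J" "J \<noteq> {}"
    and gm: "\<And>j. j \<in> J \<Longrightarrow> g j \<in> borel_measurable D"
    and gb: "\<And>j z. j \<in> J \<Longrightarrow> z \<in> space D \<Longrightarrow> \<bar>g j z\<bar> \<le> B"
    and rad: "\<And>z. (\<And>i. i < n \<Longrightarrow> z i \<in> space D) \<Longrightarrow>
        (\<Sum>\<epsilon>\<in>RS n. Max ((\<lambda>j. \<Sum>i<n. \<epsilon> i * g j (z i)) ` J)) \<le> 2 ^ n * (n * R)"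
    and B: "B > 0" and \<delta>: "0 < \<delta>" "\<delta> < 1"
  shows "measure (PiM {..<n} (\<lambda>_. D))
           {S \<in> space (PiM {..<n} (\<lambda>_. D)).
              Max ((\<lambda>j. (\<integral>z. g j z \<partial>D) - (1 / n) * (\<Sum>i<n. g j (S i))) ` J)
                \<ge> 2 * R + B * sqrt (2 * ln (1 / \<delta>) / n)} \<le> \<delta>"
proof -
  interpret D: prob_space D by (rule D)
  let ?M = "PiM {..<n} (\<lambda>_. D)"
  interpret M: prob_space ?M by (rule prob_space_PiM) (use D in auto)
  define \<Phi> where "\<Phi> S = Max ((\<lambda>j. (\<integral>z. g j z \<partial>D) - (1 / n) * (\<Sum>i<n. g j (S i))) ` J)" for S
  define t where "t = B * sqrt (2 * ln (1 / \<delta>) / n)"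
  have lnd: "ln (1 / \<delta>) > 0" using \<delta> by simp
  have t: "t > 0" using B lnd n by (simp add: t_def)
  have coord: "(\<lambda>\<omega>. g j (\<omega> k)) \<in> borel_measurable ?M" if "j \<in> J" "k \<in> {..<n}" for j k
    by (rule measurable_compose[OF measurable_component_singleton[OF that(2)] gm[OF that(1)]])
  have \<Phi>m: "\<Phi> \<in> borel_measurable ?M"
    unfolding \<Phi>_def using J
    by (intro borel_measurable_Max borel_measurable_times borel_measurable_const borel_measurable_sum
          borel_measurable_diff coord) auto
  have \<Phi>b: "\<bar>\<Phi> S\<bar> \<le> 2 * B" if "S \<in> space ?M" for S
    unfolding \<Phi>_def
  proof (rule abs_Max_le[OF J])
    fix j assume j: "j \<in> J"
    have c: "\<bar>\<integral>z. g j z \<partial>D\<bar> \<le> B" by (rule D.abs_integral_le_const[OF gm[OF j] gb[OF j]])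
    have "\<bar>\<Sum>i<n. g j (S i)\<bar> \<le> (\<Sum>i<n. B)"
      using that gb[OF j] by (intro order.trans[OF sum_abs] sum_mono) (auto simp: space_PiM PiE_def Pi_def)
    then have "\<bar>(1 / n) * (\<Sum>i<n. g j (S i))\<bar> \<le> B" using n by (simp add: abs_mult field_simps)
    then show "\<bar>(\<integral>z. g j z \<partial>D) - (1 / n) * (\<Sum>i<n. g j (S i))\<bar> \<le> 2 * B" using c by linarith
  qed
  have \<Phi>d: "\<bar>\<Phi> S - \<Phi> (S(i := y))\<bar> \<le> 2 * B / n"
    if S: "S \<in> space ?M" and i: "i \<in> {..<n}" and y: "y \<in> space D" for S i y
    unfolding \<Phi>_def
  proof (rule Max_diff_le[OF J])
    fix j assume j: "j \<in> J"
    have Si: "S i \<in> space D" using S i by (auto simp: space_PiM PiE_def Pi_def)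
    have "(\<Sum>k<n. g j ((S(i := y)) k)) = (\<Sum>k<n. g j (S k)) - g j (S i) + g j y"
    proof -
      have "(\<Sum>k<n. g j ((S(i := y)) k)) = (\<Sum>k<n. g j (S k) + (if k = i then g j y - g j (S i) else 0))"
        by (intro sum.cong) auto
      also have "\<dots> = (\<Sum>k<n. g j (S k)) - g j (S i) + g j y"
        using i by (simp add: sum.distrib)
      finally show ?thesis .
    qed
    then have "((\<integral>z. g j z \<partial>D) - (1 / n) * (\<Sum>i<n. g j (S i))) - ((\<integral>z. g j z \<partial>D) - (1 / n) * (\<Sum>k<n. g j ((S(i := y)) k)))
        = (1 / n) * (g j y - g j (S i))"
      by (rule diff_aux)
    also have "\<bar>\<dots>\<bar> \<le> (1 / n) * (2 * B)"
      using gb[OF j y] gb[OF j Si] n by (simp add: abs_mult) (simp add: field_simps)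
    finally show "\<bar>((\<integral>z. g j z \<partial>D) - (1 / n) * (\<Sum>i<n. g j (S i))) - ((\<integral>z. g j z \<partial>D) - (1 / n) * (\<Sum>k<n. g j ((S(i := y)) k)))\<bar>
        \<le> 2 * B / n" by simp
  qed
  have EPhi: "(\<integral>S. \<Phi> S \<partial>?M) \<le> 2 * R"
    unfolding \<Phi>_def by (rule symmetrization[OF D n J gm gb rad])
  have "{S \<in> space ?M. \<Phi> S \<ge> 2 * R + t} \<subseteq> {S \<in> space ?M. \<Phi> S \<ge> (\<integral>S. \<Phi> S \<partial>?M) + t}"
    using EPhi by auto
  then have "measure ?M {S \<in> space ?M. \<Phi> S \<ge> 2 * R + t} \<le> measure ?M {S \<in> space ?M. \<Phi> S \<ge> (\<integral>S. \<Phi> S \<partial>?M) + t}"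
    using \<Phi>m by (intro M.finite_measure_mono) auto
  also have "\<dots> \<le> exp (- 2 * t\<^sup>2 / (card {..<n} * (2 * B / n)\<^sup>2))"
    by (rule mcdiarmid[OF D _ _ \<Phi>m \<Phi>b \<Phi>d t]) (use n B in auto)
  also have "- 2 * t\<^sup>2 / (card {..<n} * (2 * B / n)\<^sup>2) = - ln (1 / \<delta>)"
    using n B lnd by (simp add: t_def power_mult_distrib power_divide field_simps power2_eq_square)
  also have "exp (- ln (1 / \<delta>)) = \<delta>" using \<delta> by (simp add: exp_minus)
  finally show ?thesis unfolding \<Phi>_def t_def .
qed


lemma loss_rad:
  fixes \<sigma> :: "real \<Rightarrow> real" and lf :: "real \<Rightarrow> 'b \<Rightarrow> real"
    and z :: "nat \<Rightarrow> (real^'d) \<times> 'b" and J :: "(nat \<Rightarrow> real \<times> (real^'d)) set"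
  assumes sigma_lip: "\<And>s t. \<bar>\<sigma> s - \<sigma> t\<bar> \<le> \<bar>s - t\<bar>"
    and sigma_hom: "\<And>\<alpha> t. \<alpha> \<ge> 0 \<Longrightarrow> \<sigma> (\<alpha> * t) = \<alpha> * \<sigma> t"
    and lip: "\<And>y s t. \<bar>lf s y - lf t y\<bar> \<le> A * \<bar>s - t\<bar>"
    and J: "finite J" "J \<noteq> {}" and Q: "\<And>\<theta>. \<theta> \<in> J \<Longrightarrow> path_norm m \<theta> \<le> Q"
    and x: "\<And>i l. i < n \<Longrightarrow> \<bar>fst (z i) $ l\<bar> \<le> 1" and n: "n > 0"
  shows "(\<Sum>\<epsilon>\<in>RS n. Max ((\<lambda>\<theta>. \<Sum>i<n. \<epsilon> i * lf (nn_out \<sigma> m \<theta> (fst (z i))) (snd (z i))) ` J))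
         \<le> 2 ^ n * (n * (2 * A * Q * sqrt (2 * ln (2 * real CARD('d)) / n)))"
proof -
  have A0: "A \<ge> 0" using lip[where y=undefined and s=1 and t=0] by simp
  define L where "L = 2 * ln (2 * real CARD('d))"
  have "(\<Sum>\<epsilon>\<in>RS n. Max ((\<lambda>\<theta>. \<Sum>i<n. \<epsilon> i * lf (nn_out \<sigma> m \<theta> (fst (z i))) (snd (z i))) ` J))
      \<le> (\<Sum>\<epsilon>\<in>RS n. Max ((\<lambda>\<theta>. \<Sum>i<n. \<epsilon> i * (A * nn_out \<sigma> m \<theta> (fst (z i)))) ` J))"
    by (rule contraction[OF J, where \<phi>="\<lambda>i t. lf t (snd (z i))" and v="\<lambda>\<theta> i. nn_out \<sigma> m \<theta> (fst (z i))"])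
       (rule lip)
  also have "\<dots> \<le> (\<Sum>\<epsilon>\<in>RS n. A * Max ((\<lambda>\<theta>. \<Sum>i<n. \<epsilon> i * nn_out \<sigma> m \<theta> (fst (z i))) ` J))"
  proof (intro sum_mono)
    fix \<epsilon>
    have "\<forall>\<theta>\<in>J. (\<Sum>i<n. \<epsilon> i * (A * nn_out \<sigma> m \<theta> (fst (z i))))
          \<le> A * Max ((\<lambda>\<theta>. \<Sum>i<n. \<epsilon> i * nn_out \<sigma> m \<theta> (fst (z i))) ` J)"
    proof
      fix \<theta> assume th: "\<theta> \<in> J"
      have "(\<Sum>i<n. \<epsilon> i * (A * nn_out \<sigma> m \<theta> (fst (z i)))) = A * (\<Sum>i<n. \<epsilon> i * nn_out \<sigma> m \<theta> (fst (z i)))"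
        by (simp add: sum_distrib_left mult_ac)
      also have "\<dots> \<le> A * Max ((\<lambda>\<theta>. \<Sum>i<n. \<epsilon> i * nn_out \<sigma> m \<theta> (fst (z i))) ` J)"
        using J th A0 by (intro mult_left_mono Max_ge) auto
      finally show "(\<Sum>i<n. \<epsilon> i * (A * nn_out \<sigma> m \<theta> (fst (z i))))
          \<le> A * Max ((\<lambda>\<theta>. \<Sum>i<n. \<epsilon> i * nn_out \<sigma> m \<theta> (fst (z i))) ` J)" .
    qed
    then show "Max ((\<lambda>\<theta>. \<Sum>i<n. \<epsilon> i * (A * nn_out \<sigma> m \<theta> (fst (z i)))) ` J)
        \<le> A * Max ((\<lambda>\<theta>. \<Sum>i<n. \<epsilon> i * nn_out \<sigma> m \<theta> (fst (z i))) ` J)"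
      using J by (subst Max_le_iff) auto
  qed
  also have "\<dots> = A * (\<Sum>\<epsilon>\<in>RS n. Max ((\<lambda>\<theta>. \<Sum>i<n. \<epsilon> i * nn_out \<sigma> m \<theta> (fst (z i))) ` J))"
    by (simp add: sum_distrib_left)
  also have "\<dots> \<le> A * (2 ^ n * (2 * Q * (sqrt L * sqrt n)))"
    unfolding L_def
    by (intro mult_left_mono A0 network_rad[OF sigma_lip sigma_hom J Q x n]) auto
  also have "\<dots> = 2 ^ n * (n * (2 * A * Q * sqrt (L / n)))"
  proof -
    have "n * sqrt (L / n) = sqrt L * sqrt n"
      using n by (simp add: real_sqrt_divide field_simps)
    then show ?thesis by (simp add: mult_ac)
  qed
  finally show ?thesis by (simp add: L_def)
qed


lemma l1norm_le_norm: "l1norm (v::real^'d) \<le> CARD('d) * norm v"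
proof -
  have "(\<Sum>i\<in>UNIV. \<bar>v $ i\<bar>) \<le> (\<Sum>i\<in>(UNIV::'d set). norm v)"
    by (rule sum_mono) (rule component_le_norm_cart)
  then show ?thesis unfolding l1norm_def by simp
qed

lemma l1norm_triangle: "l1norm ((v::real^'d) + w) \<le> l1norm v + l1norm w"
  unfolding l1norm_def by (simp add: sum.distrib[symmetric] sum_mono abs_triangle_ineq)

lemma l1norm_diff: "\<bar>l1norm (v::real^'d) - l1norm w\<bar> \<le> l1norm (v - w)"
proof -
  have "l1norm v \<le> l1norm (v - w) + l1norm w" using l1norm_triangle[of "v - w" w] by simp
  moreover have "l1norm w \<le> l1norm (w - v) + l1norm v" using l1norm_triangle[of "w - v" v] by simp
  moreover have "l1norm (w - v) = l1norm (v - w)" unfolding l1norm_def by (simp add: abs_minus_commute)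
  ultimately show ?thesis by linarith
qed

lemma neuron_diff:
  fixes a a' :: real and w w' x :: "real^'d"
  assumes sigma_lip: "\<And>s t. \<bar>\<sigma> s - \<sigma> t\<bar> \<le> \<bar>s - t\<bar>" and s0: "\<sigma> 0 = 0"
    and x: "\<And>l. \<bar>x $ l\<bar> \<le> 1"
  shows "\<bar>a * \<sigma> (w \<bullet> x) - a' * \<sigma> (w' \<bullet> x)\<bar> \<le> \<bar>a - a'\<bar> * l1norm w + \<bar>a'\<bar> * l1norm (w - w')"
proof -
  have s1: "\<bar>\<sigma> (w \<bullet> x)\<bar> \<le> l1norm w"
    using sigma_lip[of "w \<bullet> x" 0] s0 abs_inner_le_l1[OF x, of w] by simp
  have s2: "\<bar>\<sigma> (w \<bullet> x) - \<sigma> (w' \<bullet> x)\<bar> \<le> l1norm (w - w')"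
    using sigma_lip[of "w \<bullet> x" "w' \<bullet> x"] abs_inner_le_l1[OF x, of "w - w'"] by (simp add: inner_diff_left)
  have "a * \<sigma> (w \<bullet> x) - a' * \<sigma> (w' \<bullet> x) = (a - a') * \<sigma> (w \<bullet> x) + a' * (\<sigma> (w \<bullet> x) - \<sigma> (w' \<bullet> x))"
    by (simp add: algebra_simps)
  also have "\<bar>\<dots>\<bar> \<le> \<bar>(a - a') * \<sigma> (w \<bullet> x)\<bar> + \<bar>a' * (\<sigma> (w \<bullet> x) - \<sigma> (w' \<bullet> x))\<bar>"
    by (rule abs_triangle_ineq)
  also have "\<dots> = \<bar>a - a'\<bar> * \<bar>\<sigma> (w \<bullet> x)\<bar> + \<bar>a'\<bar> * \<bar>\<sigma> (w \<bullet> x) - \<sigma> (w' \<bullet> x)\<bar>"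
    by (simp add: abs_mult)
  also have "\<dots> \<le> \<bar>a - a'\<bar> * l1norm w + \<bar>a'\<bar> * l1norm (w - w')"
    using s1 s2 by (intro add_mono mult_left_mono) auto
  finally show ?thesis .
qed

lemma pn_term_diff:
  fixes a a' :: real and w w' :: "real^'d"
  shows "\<bar>\<bar>a\<bar> * l1norm w - \<bar>a'\<bar> * l1norm w'\<bar> \<le> \<bar>a - a'\<bar> * l1norm w + \<bar>a'\<bar> * l1norm (w - w')"
proof -
  have "\<bar>a\<bar> * l1norm w - \<bar>a'\<bar> * l1norm w' = (\<bar>a\<bar> - \<bar>a'\<bar>) * l1norm w + \<bar>a'\<bar> * (l1norm w - l1norm w')"
    by (simp add: algebra_simps)
  also have "\<bar>\<dots>\<bar> \<le> \<bar>(\<bar>a\<bar> - \<bar>a'\<bar>) * l1norm w\<bar> + \<bar>\<bar>a'\<bar> * (l1norm w - l1norm w')\<bar>"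
    by (rule abs_triangle_ineq)
  also have "\<dots> = \<bar>\<bar>a\<bar> - \<bar>a'\<bar>\<bar> * l1norm w + \<bar>a'\<bar> * \<bar>l1norm w - l1norm w'\<bar>"
    using l1norm_nonneg[of w] by (simp add: abs_mult)
  also have "\<dots> \<le> \<bar>a - a'\<bar> * l1norm w + \<bar>a'\<bar> * l1norm (w - w')"
  proof (rule add_mono)
    show "\<bar>\<bar>a\<bar> - \<bar>a'\<bar>\<bar> * l1norm w \<le> \<bar>a - a'\<bar> * l1norm w"
      using l1norm_nonneg[of w] by (intro mult_right_mono abs_triangle_ineq3) auto
    show "\<bar>a'\<bar> * \<bar>l1norm w - l1norm w'\<bar> \<le> \<bar>a'\<bar> * l1norm (w - w')"
      by (intro mult_left_mono l1norm_diff) auto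
  qed
  finally show ?thesis .
qed


definition Rset :: "(real \<times> (real^'d)) set \<Rightarrow> nat \<Rightarrow> (nat \<Rightarrow> real \<times> (real^'d)) set" where
  "Rset D1 m = {\<theta>. (\<forall>k<m. \<theta> k \<in> D1) \<and> (\<forall>k\<ge>m. \<theta> k = (0, 0))}"

lemma countable_Rset:
  fixes D1 :: "(real \<times> (real^'d)) set"
  assumes "countable D1" shows "countable (Rset D1 m)"
proof -
  define F :: "(real \<times> (real^'d)) list \<Rightarrow> nat \<Rightarrow> real \<times> (real^'d)"
    where "F xs = (\<lambda>k. if k < m then xs ! k else (0, 0))" for xs
  have "Rset D1 m \<subseteq> F ` lists D1"
  proof
    fix \<theta> assume th: "\<theta> \<in> Rset D1 m"
    have "\<theta> = F (map \<theta> [0..<m])"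
      using th by (auto simp: F_def Rset_def fun_eq_iff not_less)
    moreover have "map \<theta> [0..<m] \<in> lists D1" using th by (auto simp: Rset_def)
    ultimately show "\<theta> \<in> F ` lists D1" by blast
  qed
  moreover have "countable (F ` lists D1)" using assms by auto
  ultimately show ?thesis by (rule countable_subset)
qed

lemma approx:
  fixes \<sigma> :: "real \<Rightarrow> real" and \<theta> :: "nat \<Rightarrow> real \<times> (real^'d)"
  assumes sigma_lip: "\<And>s t. \<bar>\<sigma> s - \<sigma> t\<bar> \<le> \<bar>s - t\<bar>" and s0: "\<sigma> 0 = 0"
    and dense: "\<And>X. open X \<Longrightarrow> X \<noteq> {} \<Longrightarrow> \<exists>d\<in>D1. d \<in> X" and \<eta>: "\<eta> > 0"
  shows "\<exists>\<theta>'\<in>Rset D1 m. (\<forall>x. (\<forall>l. \<bar>x $ l\<bar> \<le> 1) \<longrightarrow> \<bar>nn_out \<sigma> m \<theta> x - nn_out \<sigma> m \<theta>' x\<bar> \<le> \<eta>)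
           \<and> \<bar>path_norm m \<theta> - path_norm m \<theta>'\<bar> \<le> \<eta>"
proof -
  define Ck where "Ck k = l1norm (snd (\<theta> k)) + (\<bar>fst (\<theta> k)\<bar> + 1) * CARD('d)" for k
  define C where "C = (\<Sum>k<m. Ck k)"
  have Ck0: "Ck k \<ge> 0" for k using l1norm_nonneg[of "snd (\<theta> k)"] by (simp add: Ck_def)
  have C0: "C \<ge> 0" unfolding C_def using Ck0 by (simp add: sum_nonneg)
  define r where "r = min 1 (\<eta> / (C + 1))"
  have r: "r > 0" "r \<le> 1" "r \<le> \<eta> / (C + 1)" using \<eta> C0 by (auto simp: r_def)
  have ex: "\<exists>d. d \<in> D1 \<and> dist (\<theta> k) d < r" for k
  proof -
    obtain d where "d \<in> D1" "d \<in> ball (\<theta> k) r" using dense[of "ball (\<theta> k) r"] r by auto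
    then have "d \<in> D1 \<and> dist (\<theta> k) d < r" by (simp add: mem_ball)
    then show ?thesis by (rule exI)
  qed
  define \<theta>' where "\<theta>' k = (if k < m then (SOME d. d \<in> D1 \<and> dist (\<theta> k) d < r) else (0, 0))" for k
  have th': "\<theta>' k \<in> D1 \<and> dist (\<theta> k) (\<theta>' k) < r" if "k < m" for k
    using someI_ex[OF ex[of k]] that by (simp add: \<theta>'_def)
  have inR: "\<theta>' \<in> Rset D1 m" using th' by (auto simp: Rset_def \<theta>'_def)
  have Ek: "\<bar>fst (\<theta> k) - fst (\<theta>' k)\<bar> * l1norm (snd (\<theta> k)) + \<bar>fst (\<theta>' k)\<bar> * l1norm (snd (\<theta> k) - snd (\<theta>' k))
        \<le> r * Ck k" if k: "k < m" for k
  proof -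
    have d: "dist (\<theta> k) (\<theta>' k) < r" using th'[OF k] by simp
    have da: "\<bar>fst (\<theta> k) - fst (\<theta>' k)\<bar> < r"
      using dist_fst_le[of "\<theta> k" "\<theta>' k"] d by (simp add: dist_real_def)
    have dw: "norm (snd (\<theta> k) - snd (\<theta>' k)) < r"
      using dist_snd_le[of "\<theta> k" "\<theta>' k"] d by (simp add: dist_norm)
    have l1: "l1norm (snd (\<theta> k) - snd (\<theta>' k)) \<le> CARD('d) * r"
      using l1norm_le_norm[of "snd (\<theta> k) - snd (\<theta>' k)"] dw
      by (smt (verit) mult_left_mono of_nat_0_le_iff)
    have a': "\<bar>fst (\<theta>' k)\<bar> \<le> \<bar>fst (\<theta> k)\<bar> + 1" using da r by linarith
    have "\<bar>fst (\<theta> k) - fst (\<theta>' k)\<bar> * l1norm (snd (\<theta> k)) \<le> r * l1norm (snd (\<theta> k))"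
      using da l1norm_nonneg[of "snd (\<theta> k)"] by (intro mult_right_mono) auto
    moreover have "\<bar>fst (\<theta>' k)\<bar> * l1norm (snd (\<theta> k) - snd (\<theta>' k)) \<le> (\<bar>fst (\<theta> k)\<bar> + 1) * (CARD('d) * r)"
      using a' l1 l1norm_nonneg[of "snd (\<theta> k) - snd (\<theta>' k)"] by (intro mult_mono) auto
    ultimately show ?thesis by (simp add: Ck_def algebra_simps)
  qed
  have rC: "r * C \<le> \<eta>"
  proof -
    have "r * C \<le> \<eta> / (C + 1) * C" using r C0 by (intro mult_right_mono) auto
    also have "\<dots> \<le> \<eta>" using C0 \<eta> by (simp add: field_simps)
    finally show ?thesis .
  qed
  have "\<bar>nn_out \<sigma> m \<theta> x - nn_out \<sigma> m \<theta>' x\<bar> \<le> \<eta>" if x: "\<forall>l. \<bar>x $ l\<bar> \<le> 1" for x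
  proof -
    have "\<bar>nn_out \<sigma> m \<theta> x - nn_out \<sigma> m \<theta>' x\<bar>
        = \<bar>\<Sum>k<m. fst (\<theta> k) * \<sigma> (snd (\<theta> k) \<bullet> x) - fst (\<theta>' k) * \<sigma> (snd (\<theta>' k) \<bullet> x)\<bar>"
      by (simp add: nn_out_def sum_subtractf)
    also have "\<dots> \<le> (\<Sum>k<m. \<bar>fst (\<theta> k) * \<sigma> (snd (\<theta> k) \<bullet> x) - fst (\<theta>' k) * \<sigma> (snd (\<theta>' k) \<bullet> x)\<bar>)"
      by (rule sum_abs)
    also have "\<dots> \<le> (\<Sum>k<m. r * Ck k)"
    proof (rule sum_mono)
      fix k assume "k \<in> {..<m}"
      then show "\<bar>fst (\<theta> k) * \<sigma> (snd (\<theta> k) \<bullet> x) - fst (\<theta>' k) * \<sigma> (snd (\<theta>' k) \<bullet> x)\<bar> \<le> r * Ck k"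
        using neuron_diff[OF sigma_lip s0, of x "fst (\<theta> k)" "snd (\<theta> k)" "fst (\<theta>' k)" "snd (\<theta>' k)"] x Ek[of k]
        by simp
    qed
    also have "\<dots> = r * C" by (simp add: C_def sum_distrib_left)
    finally show ?thesis using rC by simp
  qed
  moreover have "\<bar>path_norm m \<theta> - path_norm m \<theta>'\<bar> \<le> \<eta>"
  proof -
    have "\<bar>path_norm m \<theta> - path_norm m \<theta>'\<bar>
        = \<bar>\<Sum>k<m. \<bar>fst (\<theta> k)\<bar> * l1norm (snd (\<theta> k)) - \<bar>fst (\<theta>' k)\<bar> * l1norm (snd (\<theta>' k))\<bar>"
      by (simp add: path_norm_def sum_subtractf)
    also have "\<dots> \<le> (\<Sum>k<m. \<bar>\<bar>fst (\<theta> k)\<bar> * l1norm (snd (\<theta> k)) - \<bar>fst (\<theta>' k)\<bar> * l1norm (snd (\<theta>' k))\<bar>)"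
      by (rule sum_abs)
    also have "\<dots> \<le> (\<Sum>k<m. r * Ck k)"
    proof (rule sum_mono)
      fix k assume "k \<in> {..<m}"
      then show "\<bar>\<bar>fst (\<theta> k)\<bar> * l1norm (snd (\<theta> k)) - \<bar>fst (\<theta>' k)\<bar> * l1norm (snd (\<theta>' k))\<bar> \<le> r * Ck k"
        using pn_term_diff[of "fst (\<theta> k)" "snd (\<theta> k)" "fst (\<theta>' k)" "snd (\<theta>' k)"] Ek[of k] by simp
    qed
    also have "\<dots> = r * C" by (simp add: C_def sum_distrib_left)
    finally show ?thesis using rC by simp
  qed
  ultimately show ?thesis using inR by blast
qed


lemma c_sums: "(\<lambda>k. 1 / (real (Suc k))\<^sup>2) sums (pi\<^sup>2 / 6)"
  using inverse_squares_sums by (simp add: add.commute)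

lemma finite_level:
  fixes \<sigma> :: "real \<Rightarrow> real"
    and loss :: "real \<Rightarrow> 'b \<Rightarrow> real"
    and D :: "((real ^ 'd) \<times> 'b) measure"
    and m n :: nat and A B \<delta> Q :: real and T :: "(nat \<Rightarrow> real \<times> (real ^ 'd)) set"
  assumes sigma_lip: "\<And>s t. \<bar>\<sigma> s - \<sigma> t\<bar> \<le> \<bar>s - t\<bar>"
    and sigma_hom: "\<And>\<alpha> t. \<alpha> \<ge> 0 \<Longrightarrow> \<sigma> (\<alpha> * t) = \<alpha> * \<sigma> t"
    and loss_lip: "\<And>y s t. \<bar>loss s y - loss t y\<bar> \<le> A * \<bar>s - t\<bar>"
    and loss_bdd: "\<And>t y. \<bar>loss t y\<bar> \<le> B"
    and D: "prob_space D"
    and D_support: "\<And>z i. z \<in> space D \<Longrightarrow> \<bar>fst z $ i\<bar> \<le> 1"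
    and loss_meas: "\<And>\<theta>. (\<lambda>z. loss (nn_out \<sigma> m \<theta> (fst z)) (snd z)) \<in> borel_measurable D"
    and n_pos: "n > 0" and B: "B > 0"
    and T: "finite T" "T \<noteq> {}" "\<And>\<theta>. \<theta> \<in> T \<Longrightarrow> path_norm m \<theta> \<le> Q"
    and \<delta>: "0 < \<delta>" "\<delta> < 1"
  shows "measure (PiM {..<n} (\<lambda>_. D)) {S \<in> space (PiM {..<n} (\<lambda>_. D)). \<exists>\<theta>\<in>T.
           4 * A * sqrt (2 * ln (2 * real CARD('d)) / real n) * Q + B * sqrt (2 * ln (1 / \<delta>) / real n)
             < \<bar>pop_risk loss \<sigma> m D \<theta> - emp_risk loss \<sigma> m n S \<theta>\<bar>} \<le> 2 * \<delta>"
proof -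
  let ?M = "PiM {..<n} (\<lambda>_. D)"
  interpret M: prob_space ?M by (rule prob_space_PiM) (use D in auto)
  define R where "R = 2 * A * Q * sqrt (2 * ln (2 * real CARD('d)) / n)"
  define bnd where "bnd = 2 * R + B * sqrt (2 * ln (1 / \<delta>) / real n)"
  have bnd_eq: "bnd = 4 * A * sqrt (2 * ln (2 * real CARD('d)) / real n) * Q + B * sqrt (2 * ln (1 / \<delta>) / real n)"
    by (simp add: bnd_def R_def)
  define h :: "real \<Rightarrow> (nat \<Rightarrow> real \<times> (real ^ 'd)) \<Rightarrow> (real ^ 'd) \<times> 'b \<Rightarrow> real"
    where "h s \<theta> z = s * loss (nn_out \<sigma> m \<theta> (fst z)) (snd z)" for s \<theta> z
  define Ev where "Ev s = {S \<in> space ?M. Max ((\<lambda>\<theta>. (\<integral>z. h s \<theta> z \<partial>D) - (1 / n) * (\<Sum>i<n. h s \<theta> (S i))) ` T) \<ge> bnd}"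
    for s
  have bound: "measure ?M (Ev s) \<le> \<delta>" if s: "s = 1 \<or> s = -1" for s
    unfolding Ev_def bnd_def
  proof (rule finite_class_bound[OF D n_pos T(1,2) _ _ _ B \<delta>])
    show "h s \<theta> \<in> borel_measurable D" if "\<theta> \<in> T" for \<theta>
      unfolding h_def using loss_meas[of \<theta>] by simp
    show "\<bar>h s \<theta> z\<bar> \<le> B" for \<theta> z
      using s loss_bdd by (auto simp: h_def)
    fix z assume z: "\<And>i. i < n \<Longrightarrow> z i \<in> space D"
    show "(\<Sum>\<epsilon>\<in>RS n. Max ((\<lambda>j. \<Sum>i<n. \<epsilon> i * h s j (z i)) ` T)) \<le> 2 ^ n * (n * R)"
      unfolding h_def R_def
    proof (rule loss_rad[OF sigma_lip sigma_hom _ T, where lf="\<lambda>t y. s * loss t y"])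
      show "\<bar>s * loss a y - s * loss b y\<bar> \<le> A * \<bar>a - b\<bar>" for y a b
        using s loss_lip[of a y b] by (auto simp: right_diff_distrib[symmetric] abs_minus_commute)
      show "\<bar>fst (z i) $ l\<bar> \<le> 1" if "i < n" for i l using D_support z that by auto
    qed (use n_pos in auto)
  qed
  have hm: "h s \<theta> \<in> borel_measurable D" for s \<theta>
    unfolding h_def using loss_meas[of \<theta>] by simp
  have sets_Ev: "Ev s \<in> sets ?M" for s
  proof -
    have "(\<lambda>S. Max ((\<lambda>\<theta>. (\<integral>z. h s \<theta> z \<partial>D) - (1 / n) * (\<Sum>i<n. h s \<theta> (S i))) ` T)) \<in> borel_measurable ?M"
      using T(1)
      by (intro borel_measurable_Max borel_measurable_diff borel_measurable_const borel_measurable_times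
            borel_measurable_sum measurable_compose[OF measurable_component_singleton])
         (auto intro: hm)
    then show ?thesis unfolding Ev_def by measurable
  qed
  have sub: "{S \<in> space ?M. \<exists>\<theta>\<in>T. bnd < \<bar>pop_risk loss \<sigma> m D \<theta> - emp_risk loss \<sigma> m n S \<theta>\<bar>}
      \<subseteq> Ev 1 \<union> Ev (-1)"
  proof
    fix S assume "S \<in> {S \<in> space ?M. \<exists>\<theta>\<in>T. bnd < \<bar>pop_risk loss \<sigma> m D \<theta> - emp_risk loss \<sigma> m n S \<theta>\<bar>}"
    then obtain \<theta> where S: "S \<in> space ?M" and th: "\<theta> \<in> T"
      and gt: "bnd < \<bar>pop_risk loss \<sigma> m D \<theta> - emp_risk loss \<sigma> m n S \<theta>\<bar>" by blast
    have e1: "(\<integral>z. h 1 \<theta> z \<partial>D) - (1 / n) * (\<Sum>i<n. h 1 \<theta> (S i)) = pop_risk loss \<sigma> m D \<theta> - emp_risk loss \<sigma> m n S \<theta>"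
      by (simp add: h_def pop_risk_def emp_risk_def)
    have e2: "(\<integral>z. h (-1) \<theta> z \<partial>D) - (1 / n) * (\<Sum>i<n. h (-1) \<theta> (S i)) = emp_risk loss \<sigma> m n S \<theta> - pop_risk loss \<sigma> m D \<theta>"
      by (simp add: h_def pop_risk_def emp_risk_def sum_negf)
    have M1: "(\<integral>z. h s \<theta> z \<partial>D) - (1 / n) * (\<Sum>i<n. h s \<theta> (S i))
        \<le> Max ((\<lambda>\<theta>. (\<integral>z. h s \<theta> z \<partial>D) - (1 / n) * (\<Sum>i<n. h s \<theta> (S i))) ` T)" for s
      using T th by (intro Max_ge) auto
    show "S \<in> Ev 1 \<union> Ev (- 1)"
    proof (cases "pop_risk loss \<sigma> m D \<theta> - emp_risk loss \<sigma> m n S \<theta> \<ge> 0")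
      case True
      then have "S \<in> Ev 1" using gt M1[of 1] e1 S unfolding Ev_def by auto
      then show ?thesis by simp
    next
      case False
      then have "S \<in> Ev (-1)" using gt M1[of "-1"] e2 S unfolding Ev_def by auto
      then show ?thesis by simp
    qed
  qed
  have "measure ?M {S \<in> space ?M. \<exists>\<theta>\<in>T. bnd < \<bar>pop_risk loss \<sigma> m D \<theta> - emp_risk loss \<sigma> m n S \<theta>\<bar>}
      \<le> measure ?M (Ev 1 \<union> Ev (-1))"
    using sub sets_Ev by (intro M.finite_measure_mono) auto
  also have "\<dots> \<le> measure ?M (Ev 1) + measure ?M (Ev (-1))"
    using sets_Ev by (intro measure_Un_le) auto
  also have "\<dots> \<le> \<delta> + \<delta>" using bound by (intro add_mono) auto
  finally show ?thesis unfolding bnd_eq by simp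
qed


lemma path_norm_nonneg: "path_norm m \<theta> \<ge> 0"
  unfolding path_norm_def by (intro sum_nonneg mult_nonneg_nonneg abs_ge_zero l1norm_nonneg)

lemma half_aux: "\<not> (x::real) / 2 < 1 \<Longrightarrow> 1 \<le> x"
  by simp

theorem mainTheorem5:
  fixes \<sigma> :: "real \<Rightarrow> real"
    and loss :: "real \<Rightarrow> 'b \<Rightarrow> real"
    and D :: "((real ^ 'd) \<times> 'b) measure"
    and m n :: nat and A B \<delta> :: real
  assumes sigma_lip: "\<And>s t. \<bar>\<sigma> s - \<sigma> t\<bar> \<le> \<bar>s - t\<bar>"
    and sigma_hom: "\<And>\<alpha> t. \<alpha> \<ge> 0 \<Longrightarrow> \<sigma> (\<alpha> * t) = \<alpha> * \<sigma> t"
    and loss_lip: "\<And>y s t. \<bar>loss s y - loss t y\<bar> \<le> A * \<bar>s - t\<bar>"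
    and loss_bdd: "\<And>t y. \<bar>loss t y\<bar> \<le> B"
    and D: "prob_space D"
    and D_support: "\<And>z i. z \<in> space D \<Longrightarrow> \<bar>fst z $ i\<bar> \<le> 1"
    and loss_meas: "\<And>\<theta>. (\<lambda>z. loss (nn_out \<sigma> m \<theta> (fst z)) (snd z)) \<in> borel_measurable D"
    and n_pos: "n > 0"
    and delta_pos: "\<delta> > 0"
  shows "\<exists>E \<in> sets (PiM {..<n} (\<lambda>_. D)).
           measure (PiM {..<n} (\<lambda>_. D)) E \<ge> 1 - \<delta> \<and>
           (\<forall>S \<in> E. \<forall>\<theta>.
              \<bar>pop_risk loss \<sigma> m D \<theta> - emp_risk loss \<sigma> m n S \<theta>\<bar>
                \<le> 4 * A * sqrt (2 * ln (2 * real CARD('d)) / real n) * (path_norm m \<theta> + 1)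
                  + B * sqrt (2 * ln (2 * (\<Sum>k. 1 / (real (Suc k))\<^sup>2) * (path_norm m \<theta> + 1)\<^sup>2 / \<delta>)
                                / real n))"
proof -
  interpret D: prob_space D by (rule D)
  let ?M = "PiM {..<n} (\<lambda>_. D)"
  interpret M: prob_space ?M by (rule prob_space_PiM) (use D in auto)
  define c where "c = (\<Sum>k. 1 / (real (Suc k))\<^sup>2)"
  have c_eq: "c = pi\<^sup>2 / 6" unfolding c_def using sums_unique[OF c_sums] by simp
  have c_pos: "c > 0" unfolding c_eq by simp
  have c_sums': "(\<lambda>k. 1 / (real (Suc k))\<^sup>2) sums c" unfolding c_eq by (rule c_sums)
  have A0: "A \<ge> 0" using loss_lip[where y=undefined and s=1 and t=0] by simp
  have B0: "B \<ge> 0" using loss_bdd[of 0 undefined] by simp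
  have s0: "\<sigma> 0 = 0" using sigma_hom[of 0 0] by simp
  define s where "s = sqrt (2 * ln (2 * real CARD('d)) / real n)"
  have s_nn: "s \<ge> 0"
  proof -
    have "CARD('d) \<ge> 1" using zero_less_card_finite[where 'a='d] by linarith
    then have "real CARD('d) \<ge> 1" by simp
    then have "2 * real CARD('d) \<ge> 1" by linarith
    then show ?thesis unfolding s_def by simp
  qed
  show ?thesis
  proof (cases "B = 0")
    case True
    then have l0: "loss t y = 0" for t y using loss_bdd[of t y] by simp
    show ?thesis
    proof (intro bexI[of _ "space ?M"] conjI ballI allI)
      show "measure ?M (space ?M) \<ge> 1 - \<delta>" using delta_pos by (simp add: M.prob_space)
      fix S and \<theta> :: "nat \<Rightarrow> real \<times> (real ^ 'd)"
      have "0 \<le> 4 * A * s * (path_norm m \<theta> + 1)"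
        using A0 s_nn path_norm_nonneg[of m \<theta>] by simp
      then show "\<bar>pop_risk loss \<sigma> m D \<theta> - emp_risk loss \<sigma> m n S \<theta>\<bar>
                \<le> 4 * A * sqrt (2 * ln (2 * real CARD('d)) / real n) * (path_norm m \<theta> + 1)
                  + B * sqrt (2 * ln (2 * (\<Sum>k. 1 / (real (Suc k))\<^sup>2) * (path_norm m \<theta> + 1)\<^sup>2 / \<delta>)
                                / real n)"
        by (simp add: pop_risk_def emp_risk_def l0 True s_def)
    qed simp
  next
    case False
    then have Bpos: "B > 0" using B0 by simp
    obtain D1 :: "(real \<times> (real ^ 'd)) set" where D1: "countable D1" "\<And>X. open X \<Longrightarrow> X \<noteq> {} \<Longrightarrow> \<exists>d\<in>D1. d \<in> X"
      using countable_dense_exists by blast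
    define \<theta>0 :: "nat \<Rightarrow> real \<times> (real ^ 'd)" where "\<theta>0 = (\<lambda>_. (0, 0))"
    define Qr where "Qr q = real (Suc q)" for q
    define RQ where "RQ q = insert \<theta>0 {\<theta> \<in> Rset D1 m. path_norm m \<theta> < Qr q}" for q
    define bnd where "bnd q = 4 * A * s * Qr q + B * sqrt (2 * ln (2 * c * (Qr q)\<^sup>2 / \<delta>) / real n)" for q
    define pop :: "(nat \<Rightarrow> real \<times> (real ^ 'd)) \<Rightarrow> real" where "pop \<theta> = pop_risk loss \<sigma> m D \<theta>" for \<theta>
    define emp :: "(nat \<Rightarrow> (real ^ 'd) \<times> 'b) \<Rightarrow> (nat \<Rightarrow> real \<times> (real ^ 'd)) \<Rightarrow> real"
      where "emp S \<theta> = emp_risk loss \<sigma> m n S \<theta>" for S \<theta>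
    define bad where "bad q \<theta> = {S \<in> space ?M. bnd q < \<bar>pop \<theta> - emp S \<theta>\<bar>}" for q \<theta>
    define F where "F q = (\<Union>\<theta>\<in>RQ q. bad q \<theta>)" for q
    define Fall where "Fall = (\<Union>q. F q)"
    define E where "E = space ?M - Fall"
    have Qpos: "Qr q > 0" for q by (simp add: Qr_def)
    have pn0: "path_norm m \<theta>0 = 0" by (simp add: path_norm_def \<theta>0_def l1norm_def)
    have RQ_count: "countable (RQ q)" for q
      unfolding RQ_def using countable_Rset[OF D1(1), of m] by (auto intro: countable_subset)
    have RQ_ne: "RQ q \<noteq> {}" for q by (simp add: RQ_def)
    have RQ_pn: "path_norm m \<theta> \<le> Qr q" if "\<theta> \<in> RQ q" for \<theta> q
      using that pn0 Qpos[of q] by (auto simp: RQ_def)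
    have hmM: "(\<lambda>S. loss (nn_out \<sigma> m \<theta> (fst (S i))) (snd (S i))) \<in> borel_measurable ?M"
      if "i \<in> {..<n}" for \<theta> i
      using measurable_compose[OF measurable_component_singleton[OF that, of "\<lambda>_. D"] loss_meas[of \<theta>]]
      by simp
    have emp_m: "(\<lambda>S. emp S \<theta>) \<in> borel_measurable ?M" for \<theta>
      unfolding emp_def emp_risk_def
      by (intro borel_measurable_times borel_measurable_const borel_measurable_sum hmM)
    have bad_sets: "bad q \<theta> \<in> sets ?M" for q \<theta>
      unfolding bad_def using emp_m[of \<theta>] by measurable
    have F_sets: "F q \<in> sets ?M" for q
      unfolding F_def by (intro sets.countable_UN'[OF RQ_count]) (use bad_sets in auto)
    have Fall_sets: "Fall \<in> sets ?M" unfolding Fall_def using F_sets by auto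
    have F_meas: "measure ?M (F q) \<le> \<delta> / (c * (Qr q)\<^sup>2)" for q
    proof (cases "\<delta> / (c * (Qr q)\<^sup>2) / 2 < 1")
      case False
      then have "1 \<le> \<delta> / (c * (Qr q)\<^sup>2)" by (rule half_aux)
      moreover have "measure ?M (F q) \<le> 1" by (rule M.prob_le_1)
      ultimately show ?thesis by linarith
    next
      case True
      define \<delta>' where "\<delta>' = \<delta> / (c * (Qr q)\<^sup>2) / 2"
      have d'pos: "0 < \<delta>'" using delta_pos c_pos Qpos[of q] by (simp add: \<delta>'_def)
      have d'1: "\<delta>' < 1" using True by (simp add: \<delta>'_def)
      have inv: "1 / \<delta>' = 2 * c * (Qr q)\<^sup>2 / \<delta>"
        using delta_pos c_pos Qpos[of q] by (simp add: \<delta>'_def field_simps)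
      define e where "e = from_nat_into (RQ q)"
      have range_e: "range e = RQ q" unfolding e_def by (rule range_from_nat_into[OF RQ_ne RQ_count])
      define G where "G k = (\<Union>j\<in>{..k}. bad q (e j))" for k
      have G_eq: "G k = {S \<in> space ?M. \<exists>\<theta>\<in>e ` {..k}.
           4 * A * sqrt (2 * ln (2 * real CARD('d)) / real n) * Qr q + B * sqrt (2 * ln (1 / \<delta>') / real n)
             < \<bar>pop_risk loss \<sigma> m D \<theta> - emp_risk loss \<sigma> m n S \<theta>\<bar>}" for k
        unfolding G_def bad_def bnd_def inv pop_def emp_def s_def by blast
      have G_meas: "measure ?M (G k) \<le> 2 * \<delta>'" for k
        unfolding G_eq
      proof (rule finite_level[OF sigma_lip sigma_hom loss_lip loss_bdd D D_support loss_meas n_pos Bpos _ _ _ d'pos d'1])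
        show "finite (e ` {..k})" by simp
        show "e ` {..k} \<noteq> {}" by simp
        show "path_norm m \<theta> \<le> Qr q" if "\<theta> \<in> e ` {..k}" for \<theta>
          using that range_e RQ_pn by blast
      qed
      have G_sets: "range G \<subseteq> sets ?M" unfolding G_def using bad_sets by auto
      have G_inc: "incseq G" unfolding G_def incseq_def by force
      have F_eq: "F q = (\<Union>k. G k)"
        unfolding F_def G_def range_e[symmetric] by auto
      have "(\<lambda>k. measure ?M (G k)) \<longlonglongrightarrow> measure ?M (\<Union>k. G k)"
        by (rule M.finite_Lim_measure_incseq[OF G_sets G_inc])
      then have "measure ?M (\<Union>k. G k) \<le> 2 * \<delta>'"
        by (rule LIMSEQ_le_const2) (use G_meas in auto)
      then show ?thesis unfolding F_eq by (simp add: \<delta>'_def)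
    qed
    have Fall_meas: "measure ?M Fall \<le> \<delta>"
    proof -
      have sd: "(\<lambda>q. \<delta> / (c * (Qr q)\<^sup>2)) sums \<delta>"
      proof -
        have "(\<lambda>k. \<delta> / c * (1 / (real (Suc k))\<^sup>2)) sums (\<delta> / c * c)"
          by (rule sums_mult[OF c_sums'])
        moreover have "\<delta> / c * c = \<delta>" using c_pos by simp
        moreover have "(\<lambda>k. \<delta> / c * (1 / (real (Suc k))\<^sup>2)) = (\<lambda>q. \<delta> / (c * (Qr q)\<^sup>2))"
          by (simp add: Qr_def fun_eq_iff)
        ultimately show ?thesis by simp
      qed
      have summ: "summable (\<lambda>q. measure ?M (F q))"
        by (rule summable_comparison_test'[OF sums_summable[OF sd]]) (use F_meas in auto)
      have "measure ?M Fall \<le> (\<Sum>q. measure ?M (F q))"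
        unfolding Fall_def by (rule M.finite_measure_subadditive_countably) (use F_sets summ in auto)
      also have "\<dots> \<le> (\<Sum>q. \<delta> / (c * (Qr q)\<^sup>2))"
        by (rule suminf_le) (use F_meas summ sums_summable[OF sd] in auto)
      also have "\<dots> = \<delta>" using sd by (simp add: sums_iff)
      finally show ?thesis .
    qed
    have E_sets: "E \<in> sets ?M" unfolding E_def using Fall_sets by auto
    have E_meas: "measure ?M E \<ge> 1 - \<delta>"
      unfolding E_def using M.prob_compl[OF Fall_sets] Fall_meas by simp
    have main: "\<bar>pop \<theta> - emp S \<theta>\<bar> \<le> 4 * A * s * (path_norm m \<theta> + 1)
                  + B * sqrt (2 * ln (2 * c * (path_norm m \<theta> + 1)\<^sup>2 / \<delta>) / real n)"
      if S: "S \<in> E" for S \<theta>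
    proof -
      have Ssp: "S \<in> space ?M" and nF: "\<And>q. S \<notin> F q" using S by (auto simp: E_def Fall_def)
      have Si: "S i \<in> space D" if "i < n" for i using Ssp that by (auto simp: space_PiM PiE_def Pi_def)
      define p where "p = path_norm m \<theta>"
      have p0: "p \<ge> 0" unfolding p_def by (rule path_norm_nonneg)
      define q where "q = nat \<lfloor>p\<rfloor>"
      have Qq: "Qr q = of_int \<lfloor>p\<rfloor> + 1" using p0 by (simp add: Qr_def q_def)
      have pQ: "p < Qr q" "Qr q \<le> p + 1" unfolding Qq by linarith+
      have hint: "integrable D (\<lambda>z. loss (nn_out \<sigma> m \<theta>' (fst z)) (snd z))" for \<theta>'
        using loss_bdd loss_meas[of \<theta>'] by (intro D.integrable_const_bound[where B=B]) auto
      have key: "\<bar>pop \<theta> - emp S \<theta>\<bar> \<le> bnd q"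
      proof (rule ccontr)
        assume "\<not> ?thesis"
        then have gt: "bnd q < \<bar>pop \<theta> - emp S \<theta>\<bar>" by simp
        define gap where "gap = \<bar>pop \<theta> - emp S \<theta>\<bar> - bnd q"
        have gap: "gap > 0" using gt by (simp add: gap_def)
        define \<eta> where "\<eta> = min (gap / (2 * A + 1)) ((Qr q - p) / 2)"
        have \<eta>: "\<eta> > 0" using gap A0 pQ by (simp add: \<eta>_def)
        obtain \<theta>' where \<theta>': "\<theta>' \<in> Rset D1 m"
          and fd: "\<forall>x. (\<forall>l. \<bar>x $ l\<bar> \<le> 1) \<longrightarrow> \<bar>nn_out \<sigma> m \<theta> x - nn_out \<sigma> m \<theta>' x\<bar> \<le> \<eta>"
          and pd: "\<bar>path_norm m \<theta> - path_norm m \<theta>'\<bar> \<le> \<eta>"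
          using approx[OF sigma_lip s0 D1(2) \<eta>, of m \<theta>] by blast
        have "path_norm m \<theta>' \<le> p + \<eta>" using pd by (simp add: p_def)
        also have "\<dots> < Qr q"
        proof -
          have "\<eta> \<le> (Qr q - p) / 2" unfolding \<eta>_def by (rule min.cobounded2)
          then show ?thesis using pQ by argo
        qed
        finally have "path_norm m \<theta>' < Qr q" .
        then have inRQ: "\<theta>' \<in> RQ q" unfolding RQ_def using \<theta>' by auto
        have lossd: "\<bar>loss (nn_out \<sigma> m \<theta> (fst z)) (snd z) - loss (nn_out \<sigma> m \<theta>' (fst z)) (snd z)\<bar> \<le> A * \<eta>"
          if z: "z \<in> space D" for z
        proof -
          have "\<bar>nn_out \<sigma> m \<theta> (fst z) - nn_out \<sigma> m \<theta>' (fst z)\<bar> \<le> \<eta>"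
            using fd D_support[OF z] by blast
          then show ?thesis
            using loss_lip[of "nn_out \<sigma> m \<theta> (fst z)" "snd z" "nn_out \<sigma> m \<theta>' (fst z)"] A0
            by (meson mult_left_mono order_trans)
        qed
        have popd: "\<bar>pop \<theta> - pop \<theta>'\<bar> \<le> A * \<eta>"
        proof -
          have "pop \<theta> - pop \<theta>' = (\<integral>z. loss (nn_out \<sigma> m \<theta> (fst z)) (snd z) - loss (nn_out \<sigma> m \<theta>' (fst z)) (snd z) \<partial>D)"
            unfolding pop_def pop_risk_def by (rule Bochner_Integration.integral_diff[OF hint hint, symmetric])
          also have "\<bar>\<dots>\<bar> \<le> A * \<eta>"
            by (rule D.abs_integral_le_const[OF borel_measurable_diff[OF loss_meas loss_meas] lossd])
          finally show ?thesis .
        qed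
        have empd: "\<bar>emp S \<theta> - emp S \<theta>'\<bar> \<le> A * \<eta>"
        proof -
          have "emp S \<theta> - emp S \<theta>' = (1 / n) * (\<Sum>i<n. loss (nn_out \<sigma> m \<theta> (fst (S i))) (snd (S i))
                 - loss (nn_out \<sigma> m \<theta>' (fst (S i))) (snd (S i)))"
            by (simp add: emp_def emp_risk_def sum_subtractf right_diff_distrib)
          also have "\<bar>\<dots>\<bar> \<le> (1 / n) * (\<Sum>i<n. A * \<eta>)"
          proof -
            have "\<bar>\<Sum>i<n. loss (nn_out \<sigma> m \<theta> (fst (S i))) (snd (S i))
                 - loss (nn_out \<sigma> m \<theta>' (fst (S i))) (snd (S i))\<bar> \<le> (\<Sum>i<n. A * \<eta>)"
              (is "\<bar>?X\<bar> \<le> ?Y")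
              by (rule order.trans[OF sum_abs sum_mono]) (use lossd Si in auto)
            have "\<bar>(1 / n) * ?X\<bar> = (1 / n) * \<bar>?X\<bar>" by (simp add: abs_mult)
            also have "\<dots> \<le> (1 / n) * ?Y" using \<open>\<bar>?X\<bar> \<le> ?Y\<close> by (intro mult_left_mono) auto
            finally show ?thesis .
          qed
          also have "\<dots> = A * \<eta>" using n_pos by simp
          finally show ?thesis .
        qed
        have "A * \<eta> \<le> A * (gap / (2 * A + 1))" using A0 unfolding \<eta>_def by (intro mult_left_mono min.cobounded1)
        moreover have "2 * (A * (gap / (2 * A + 1))) < gap" using A0 gap by (simp add: field_simps)
        ultimately have "2 * (A * \<eta>) < gap" by linarith
        then have "bnd q < \<bar>pop \<theta>' - emp S \<theta>'\<bar>" using popd empd by (simp add: gap_def abs_le_iff abs_if split: if_splits)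
        then have "S \<in> bad q \<theta>'" using Ssp by (simp add: bad_def)
        then have "S \<in> F q" using inRQ by (auto simp: F_def)
        with nF show False by blast
      qed
      have mono: "bnd q \<le> 4 * A * s * (p + 1) + B * sqrt (2 * ln (2 * c * (p + 1)\<^sup>2 / \<delta>) / real n)"
        unfolding bnd_def
      proof (rule add_mono)
        show "4 * A * s * Qr q \<le> 4 * A * s * (p + 1)" using pQ A0 s_nn by (intro mult_left_mono) auto
        have Q0: "Qr q > 0" by (rule Qpos)
        have "(Qr q)\<^sup>2 \<le> (p + 1)\<^sup>2" using pQ Q0 by (intro power_mono) auto
        then have "2 * c * (Qr q)\<^sup>2 / \<delta> \<le> 2 * c * (p + 1)\<^sup>2 / \<delta>"
          using c_pos delta_pos by (intro divide_right_mono mult_left_mono) auto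
        moreover have "0 < 2 * c * (Qr q)\<^sup>2 / \<delta>" using c_pos delta_pos Q0 by simp
        ultimately have "ln (2 * c * (Qr q)\<^sup>2 / \<delta>) \<le> ln (2 * c * (p + 1)\<^sup>2 / \<delta>)" by simp
        then show "B * sqrt (2 * ln (2 * c * (Qr q)\<^sup>2 / \<delta>) / real n) \<le> B * sqrt (2 * ln (2 * c * (p + 1)\<^sup>2 / \<delta>) / real n)"
          using B0 n_pos by (intro mult_left_mono real_sqrt_le_mono divide_right_mono) auto
      qed
      show ?thesis using key mono by (simp add: p_def)
    qed
    show ?thesis
      using E_sets E_meas main unfolding pop_def emp_def s_def c_def by blast
  qed
qed


end
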